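(* Assume (A1), (A2), (A3) (see context). Then $\mathrm x\in\mathbb R^n$ and $\mathrm y\in\mathbb R^{p+q}$ are optimal solutions of (P) and (D), respectively, if and only if there exist $\mathrm Z\in\mathbb R^{r(p+q)}$ and $\mathrm Y=\mathbf 1_m\otimes\mathrm y$ such that $0\in\Phi(\mathrm x,\mathrm Y,\mathrm Z)$.
   Context: Let $m\ge2$, $n_1,\dots,n_m\ge1$, $p,q\ge0$ integers, $n=\sum_in_i$, $\mathcal V=\{1,\dots,m\}$. For $i\in\mathcal V$ let $f_i:\mathbb R^{n_i}\to\mathbb R$, $A_i\in\mathbb R^{p\times n_i}$, $b_i\in\mathbb R^p$, $g_i:\mathbb R^{n_i}\to\mathbb R^q$, $\Omega_i\subseteq\mathbb R^{n_i}$, $G_i(\mathrm x_i)=\mathrm{col}(A_i\mathrm x_i-b_i,g_i(\mathrm x_i))\in\mathbb R^{p+q}$, $\mathcal K=\{0_p\}\times\mathbb R^q_-$, $\mathcal K^\circ=\mathbb R^p\times\mathbb R^q_+$. Problem (P): minimize $\sum_if_i(\mathrm x_i)$ over $\mathrm x=\mathrm{col}(\mathrm x_1,\dots,\mathrm x_m)$ s.t. $\sum_iG_i(\mathrm x_i)\in\mathcal K$, $\mathrm x_i\in\Omega_i$. With $\delta_S$ the indicator of $S$, $\ell_i(\mathrm x_i,\mathrm y)=f_i(\mathrm x_i)+\mathrm y^\top G_i(\mathrm x_i)+\delta_{\Omega_i}(\mathrm x_i)-\delta_{\mathcal K^\circ}(\mathrm y)$; dual (D): maximize $\sum_i\inf_{\mathrm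 x_i}\ell_i(\mathrm x_i,\mathrm y)$ over $\mathrm y\in\mathbb R^{p+q}$. Assumptions. (A1) $\mathcal G=(\mathcal V,\mathcal E)$ connected undirected; $L\in\mathbb R^{m\times m}$ symmetric, compatible with $\mathcal G$ ($L_{ij}=0$ for $i\ne j$, $(i,j)\notin\mathcal E$, and $\mathrm{null}(L)=\mathrm{span}\{\mathbf 1_m\}$), $L=U^\top U$ with $U\in\mathbb R^{r\times m}$ full row rank, $U\mathbf 1_m=0$. (A2) $f_i$ and components of $g_i$ proper closed convex, $\Omega_i$ nonempty closed convex, (P) has an optimal solution. (A3) there is $\bar{\mathrm x}$ with $\bar{\mathrm x}_i\in\mathrm{int}\,\Omega_i$, $\sum_i(A_i\bar{\mathrm x}_i-b_i)=0$, $\sum_ig_i(\bar{\mathrm x}_i)<0$. Operator. $\mathbf U=U\otimes I_{p+q}$; for $\mathrm Y=\mathrm{col}(\mathrm y_1,\dots,\mathrm y_m)$, $\mathrm y_i\in\mathbb R^{p+q}$, $\mathcal L(\mathrm x,\mathrm Y)=\sum_i\ell_i(\mathrm x_i,\mathrm y_i)$; $\partial_{\mathrm x}\mathcal L$ is the convex subdifferential in $\mathrm x$, $\partial_{\mathrm Y}\mathcal L:=-\partial_{\mathrm Y}[-\mathcal L]$; $\Phi(\mathrm x,\mathrm Y,\mathrm Z)=\partial_{\mathrm x}\mathcal L(\mathrm x,\mathrm Y)\times(-\partial_{\mathrm Y}\mathcal L(\mathrm x,\mathrm Y)+\mathbf U^\top\mathrm Z)\times\{-\mathbf U\mathrm Y\}$.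 *)

theory Defs
  imports "Jordan_Normal_Form.Matrix" "HOL-Library.Extended_Real"
begin

definition ones_vec :: "nat \<Rightarrow> real vec" where
  "ones_vec d = vec d (\<lambda>_. 1)"

definition kron_mat :: "real mat \<Rightarrow> real mat \<Rightarrow> real mat" where
  "kron_mat A B = mat (dim_row A * dim_row B) (dim_col A * dim_col B)
     (\<lambda>(i,j). A $$ (i div dim_row B, j div dim_col B) * B $$ (i mod dim_row B, j mod dim_col B))"

definition kron_vec :: "real vec \<Rightarrow> real vec \<Rightarrow> real vec" where
  "kron_vec a b = vec (dim_vec a * dim_vec b) (\<lambda>i. a $ (i div dim_vec b) * b $ (i mod dim_vec b))"

definition block :: "real vec \<Rightarrow> nat \<Rightarrow> nat \<Rightarrow> real vec" where
  "block x off d = vec d (\<lambda>j. x $ (off + j))"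

definition sumv :: "nat \<Rightarrow> ('i \<Rightarrow> real vec) \<Rightarrow> 'i set \<Rightarrow> real vec" where
  "sumv d F I = vec d (\<lambda>j. \<Sum>i\<in>I. F i $ j)"

definition vec_conv :: "nat \<Rightarrow> (nat \<Rightarrow> real vec) \<Rightarrow> real vec \<Rightarrow> bool" where
  "vec_conv d X x \<longleftrightarrow> (\<forall>k. X k \<in> carrier_vec d) \<and> x \<in> carrier_vec d \<and>
     (\<forall>j<d. (\<lambda>k. X k $ j) \<longlonglongrightarrow> x $ j)"

definition convex_set_vec :: "nat \<Rightarrow> real vec set \<Rightarrow> bool" where
  "convex_set_vec d S \<longleftrightarrow> S \<subseteq> carrier_vec d \<and>
     (\<forall>x\<in>S. \<forall>y\<in>S. \<forall>t::real. 0 \<le> t \<and> t \<le> 1 \<longrightarrow> t \<cdot>\<^sub>v x + (1 - t) \<cdot>\<^sub>v y \<in> S)"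

definition closed_set_vec :: "nat \<Rightarrow> real vec set \<Rightarrow> bool" where
  "closed_set_vec d S \<longleftrightarrow> S \<subseteq> carrier_vec d \<and>
     (\<forall>X x. vec_conv d X x \<and> (\<forall>k. X k \<in> S) \<longrightarrow> x \<in> S)"

definition interior_vec :: "nat \<Rightarrow> real vec set \<Rightarrow> real vec set" where
  "interior_vec d S = {x \<in> S. \<exists>e>0. \<forall>z\<in>carrier_vec d.
       (\<Sum>j<d. (z $ j - x $ j)^2) < e^2 \<longrightarrow> z \<in> S}"

text \<open>Convexity and closedness (lower semicontinuity) of a real-valued function on R^d.
  A real-valued function on all of R^d is automatically proper.\<close>
definition convex_fun_vec :: "nat \<Rightarrow> (real vec \<Rightarrow> real) \<Rightarrow> bool" where
  "convex_fun_vec d f \<longleftrightarrow> (\<forall>x\<in>carrier_vec d. \<forall>y\<in>carrier_vec d. \<forall>t::real. 0 \<le> t \<and> t \<le> 1 \<longrightarrow>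
      f (t \<cdot>\<^sub>v x + (1 - t) \<cdot>\<^sub>v y) \<le> t * f x + (1 - t) * f y)"

definition lsc_fun_vec :: "nat \<Rightarrow> (real vec \<Rightarrow> real) \<Rightarrow> bool" where
  "lsc_fun_vec d f \<longleftrightarrow> (\<forall>X x. vec_conv d X x \<longrightarrow>
      (\<forall>c. c < f x \<longrightarrow> (\<exists>N. \<forall>k\<ge>N. c < f (X k))))"

definition proper_closed_convex_vec :: "nat \<Rightarrow> (real vec \<Rightarrow> real) \<Rightarrow> bool" where
  "proper_closed_convex_vec d f \<longleftrightarrow> convex_fun_vec d f \<and> lsc_fun_vec d f"

definition indic :: "'a set \<Rightarrow> 'a \<Rightarrow> ereal" where
  "indic S x = (if x \<in> S then 0 else \<infinity>)"

definition subdiff :: "nat \<Rightarrow> (real vec \<Rightarrow> ereal) \<Rightarrow> real vec \<Rightarrow> real vec set" where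
  "subdiff d \<phi> x = {v \<in> carrier_vec d. \<bar>\<phi> x\<bar> \<noteq> \<infinity> \<and>
      (\<forall>z\<in>carrier_vec d. \<phi> x + ereal (v \<bullet> (z - x)) \<le> \<phi> z)}"

text \<open>Agents are indexed 0..m-1; x = col(x_0,...,x_{m-1}) in R^n, n = sum n_i.\<close>

definition offs :: "(nat \<Rightarrow> nat) \<Rightarrow> nat \<Rightarrow> nat" where
  "offs nn i = (\<Sum>k<i. nn k)"

definition Gfun :: "(nat \<Rightarrow> real mat) \<Rightarrow> (nat \<Rightarrow> real vec) \<Rightarrow> (nat \<Rightarrow> real vec \<Rightarrow> real vec)
    \<Rightarrow> nat \<Rightarrow> real vec \<Rightarrow> real vec" where
  "Gfun A b g i xi = (A i *\<^sub>v xi - b i) @\<^sub>v g i xi"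

definition Kcone :: "nat \<Rightarrow> nat \<Rightarrow> real vec set" where
  "Kcone p q = {v \<in> carrier_vec (p+q). (\<forall>j<p. v $ j = 0) \<and> (\<forall>j. p \<le> j \<and> j < p+q \<longrightarrow> v $ j \<le> 0)}"

definition Kpolar :: "nat \<Rightarrow> nat \<Rightarrow> real vec set" where
  "Kpolar p q = {v \<in> carrier_vec (p+q). \<forall>j. p \<le> j \<and> j < p+q \<longrightarrow> 0 \<le> v $ j}"

definition feasibleP :: "nat \<Rightarrow> (nat \<Rightarrow> nat) \<Rightarrow> nat \<Rightarrow> nat \<Rightarrow> (nat \<Rightarrow> real mat) \<Rightarrow> (nat \<Rightarrow> real vec)
    \<Rightarrow> (nat \<Rightarrow> real vec \<Rightarrow> real vec) \<Rightarrow> (nat \<Rightarrow> real vec set) \<Rightarrow> real vec \<Rightarrow> bool" where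
  "feasibleP m nn p q A b g \<Omega> x \<longleftrightarrow> x \<in> carrier_vec (\<Sum>i<m. nn i) \<and>
     (\<forall>i<m. block x (offs nn i) (nn i) \<in> \<Omega> i) \<and>
     sumv (p+q) (\<lambda>i. Gfun A b g i (block x (offs nn i) (nn i))) {..<m} \<in> Kcone p q"

definition objP :: "nat \<Rightarrow> (nat \<Rightarrow> nat) \<Rightarrow> (nat \<Rightarrow> real vec \<Rightarrow> real) \<Rightarrow> real vec \<Rightarrow> real" where
  "objP m nn f x = (\<Sum>i<m. f i (block x (offs nn i) (nn i)))"

definition optimalP where
  "optimalP m nn p q f A b g \<Omega> x \<longleftrightarrow> feasibleP m nn p q A b g \<Omega> x \<and>
     (\<forall>x'. feasibleP m nn p q A b g \<Omega> x' \<longrightarrow> objP m nn f x \<le> objP m nn f x')"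

definition lagr_i :: "nat \<Rightarrow> nat \<Rightarrow> (nat \<Rightarrow> real vec \<Rightarrow> real) \<Rightarrow> (nat \<Rightarrow> real mat) \<Rightarrow> (nat \<Rightarrow> real vec)
    \<Rightarrow> (nat \<Rightarrow> real vec \<Rightarrow> real vec) \<Rightarrow> (nat \<Rightarrow> real vec set) \<Rightarrow> nat \<Rightarrow> real vec \<Rightarrow> real vec \<Rightarrow> ereal" where
  "lagr_i p q f A b g \<Omega> i xi y =
     ereal (f i xi + y \<bullet> Gfun A b g i xi) + indic (\<Omega> i) xi - indic (Kpolar p q) y"

definition dualfun where
  "dualfun m nn p q f A b g \<Omega> y = (\<Sum>i<m. INF xi\<in>carrier_vec (nn i). lagr_i p q f A b g \<Omega> i xi y)"

definition optimalD where
  "optimalD m nn p q f A b g \<Omega> y \<longleftrightarrow> y \<in> carrier_vec (p+q) \<and>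
     (\<forall>y'\<in>carrier_vec (p+q). dualfun m nn p q f A b g \<Omega> y' \<le> dualfun m nn p q f A b g \<Omega> y)"

definition Lagr where
  "Lagr m nn p q f A b g \<Omega> x Y =
     (\<Sum>i<m. lagr_i p q f A b g \<Omega> i (block x (offs nn i) (nn i)) (block Y (i*(p+q)) (p+q)))"

definition Phi :: "nat \<Rightarrow> (nat \<Rightarrow> nat) \<Rightarrow> nat \<Rightarrow> nat \<Rightarrow> (nat \<Rightarrow> real vec \<Rightarrow> real) \<Rightarrow> (nat \<Rightarrow> real mat)
    \<Rightarrow> (nat \<Rightarrow> real vec) \<Rightarrow> (nat \<Rightarrow> real vec \<Rightarrow> real vec) \<Rightarrow> (nat \<Rightarrow> real vec set) \<Rightarrow> real mat
    \<Rightarrow> real vec \<Rightarrow> real vec \<Rightarrow> real vec \<Rightarrow> (real vec \<times> real vec \<times> real vec) set" where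
  "Phi m nn p q f A b g \<Omega> U x Y Z =
     (let UU = kron_mat U (1\<^sub>m (p+q));
          dx = subdiff (\<Sum>i<m. nn i) (\<lambda>x'. Lagr m nn p q f A b g \<Omega> x' Y) x;
          dY = (\<lambda>v. - v) ` subdiff (m*(p+q)) (\<lambda>Y'. - Lagr m nn p q f A b g \<Omega> x Y') Y
      in dx \<times> {- w + transpose_mat UU *\<^sub>v Z | w. w \<in> dY} \<times> {- (UU *\<^sub>v Y)})"

end

theory Submission
  imports Defs "Jordan_Normal_Form.Determinant"
begin

definition cmb :: "real \<Rightarrow> real vec \<Rightarrow> real vec \<Rightarrow> real vec" where
  "cmb t x y = t \<cdot>\<^sub>v x + (1 - t) \<cdot>\<^sub>v y"

definition cvx_set :: "real vec set \<Rightarrow> bool" where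
  "cvx_set S \<longleftrightarrow> (\<forall>x\<in>S. \<forall>y\<in>S. \<forall>t. 0 \<le> t \<and> t \<le> 1 \<longrightarrow> cmb t x y \<in> S)"

definition cvx_on :: "real vec set \<Rightarrow> (real vec \<Rightarrow> real) \<Rightarrow> bool" where
  "cvx_on S F \<longleftrightarrow> (\<forall>x\<in>S. \<forall>y\<in>S. \<forall>t. 0 \<le> t \<and> t \<le> 1 \<longrightarrow> F (cmb t x y) \<le> t * F x + (1 - t) * F y)"

definition aff_on :: "real vec set \<Rightarrow> (real vec \<Rightarrow> real) \<Rightarrow> bool" where
  "aff_on S F \<longleftrightarrow> (\<forall>x\<in>S. \<forall>y\<in>S. \<forall>t. F (cmb t x y) = t * F x + (1 - t) * F y)"

lemma key_ineq:
  fixes cx cy Fx Fy Fz v :: real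
  assumes "0 < cx" "cy < 0" "v \<le> Fz"
    and "Fz \<le> (- cy / (cx - cy)) * Fx + (1 - (- cy / (cx - cy))) * Fy"
  shows "(v - Fx) / cx \<le> (Fy - v) / (- cy)"
proof -
  have d: "cx - cy > 0" using assms by simp
  have "v \<le> (- cy / (cx - cy)) * Fx + (1 - (- cy / (cx - cy))) * Fy" using assms by linarith
  also have "\<dots> = (- cy * Fx + cx * Fy) / (cx - cy)"
  proof -
    have "1 - (- cy / (cx - cy)) = cx / (cx - cy)" using d by (simp add: field_simps)
    thus ?thesis by (simp add: add_divide_distrib diff_divide_distrib)
  qed
  finally have "v * (cx - cy) \<le> - cy * Fx + cx * Fy" using d by (simp add: field_simps)
  hence "(v - Fx) * (- cy) \<le> (Fy - v) * cx" by (simp add: algebra_simps)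
  thus ?thesis using assms by (simp add: field_simps)
qed

lemma step1:
  assumes X: "cvx_set X" and F: "cvx_on X F" and c: "cvx_on X c"
    and ceq: "\<not> ineq \<Longrightarrow> aff_on X c"
    and lb: "\<forall>x\<in>X. (if ineq then c x \<le> 0 else c x = 0) \<longrightarrow> v \<le> F x"
    and sl: "ineq \<Longrightarrow> \<exists>x\<in>X. c x < 0"
    and e1: "\<not> ineq \<Longrightarrow> \<forall>x\<in>X. 0 < c x \<longrightarrow> (\<exists>y\<in>X. c y < 0)"
    and e2: "\<not> ineq \<Longrightarrow> \<forall>x\<in>X. c x < 0 \<longrightarrow> (\<exists>y\<in>X. 0 < c y)"
  shows "\<exists>lam. (ineq \<longrightarrow> 0 \<le> lam) \<and> (\<forall>x\<in>X. v \<le> F x + lam * c x)"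
proof -
  have key: "(v - F x) / c x \<le> (F y - v) / (- c y)" if x: "x \<in> X" "0 < c x" and y: "y \<in> X" "c y < 0" for x y
  proof -
    define th where "th = - c y / (c x - c y)"
    have th01: "0 \<le> th" "th \<le> 1" using x y by (auto simp: th_def field_simps)
    have zX: "cmb th x y \<in> X" using X x y th01 unfolding cvx_set_def by blast
    have "th * c x + (1 - th) * c y = 0" using x y by (simp add: th_def field_simps)
    moreover have "c (cmb th x y) \<le> th * c x + (1 - th) * c y" using c x y th01 unfolding cvx_on_def by blast
    moreover have "\<not> ineq \<Longrightarrow> c (cmb th x y) = th * c x + (1 - th) * c y" using ceq x y unfolding aff_on_def by blast
    ultimately have "if ineq then c (cmb th x y) \<le> 0 else c (cmb th x y) = 0" by auto
    hence "v \<le> F (cmb th x y)" using lb zX by blast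
    moreover have "F (cmb th x y) \<le> th * F x + (1 - th) * F y" using F x y th01 unfolding cvx_on_def by blast
    ultimately show ?thesis using key_ineq[OF x(2) y(2)] unfolding th_def by blast
  qed
  define S where "S = {(v - F x) / c x | x. x \<in> X \<and> 0 < c x}"
  show ?thesis
  proof (cases "S = {}")
    case True
    have "\<forall>x\<in>X. v \<le> F x + 0 * c x"
    proof
      fix x assume x: "x \<in> X"
      have nx: "\<not> 0 < c x" using True x unfolding S_def by blast
      show "v \<le> F x + 0 * c x"
      proof (cases "c x = 0")
        case True thus ?thesis using lb x by (auto split: if_splits)
      next
        case False
        hence cx: "c x < 0" using nx by simp
        show ?thesis
        proof (cases ineq)
          case True thus ?thesis using lb x cx by auto
        next
          case False
          then obtain y where "y \<in> X" "0 < c y" using e2 x cx by blast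
          thus ?thesis using True unfolding S_def by blast
        qed
      qed
    qed
    thus ?thesis by (intro exI[of _ 0]) auto
  next
    case False
    then obtain x0 where x0: "x0 \<in> X" "0 < c x0" unfolding S_def by blast
    obtain y0 where y0: "y0 \<in> X" "c y0 < 0" using sl e1 x0 by (cases ineq) auto
    have bdd: "bdd_above S" unfolding S_def bdd_above_def using key[OF _ _ y0] by blast
    define lam where "lam = (if ineq then max 0 (Sup S) else Sup S)"
    have lamS: "Sup S \<le> lam" unfolding lam_def by auto
    have "\<forall>x\<in>X. v \<le> F x + lam * c x"
    proof
      fix x assume x: "x \<in> X"
      consider "0 < c x" | "c x = 0" | "c x < 0" by linarith
      thus "v \<le> F x + lam * c x"
      proof cases
        case 1
        have "(v - F x) / c x \<in> S" using x 1 unfolding S_def by blast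
        hence "(v - F x) / c x \<le> lam" using cSup_upper[OF _ bdd] lamS by fastforce
        thus ?thesis using 1 by (simp add: field_simps)
      next
        case 2 thus ?thesis using lb x by (auto split: if_splits)
      next
        case 3
        have "Sup S \<le> (F x - v) / (- c x)"
        proof (rule cSup_least)
          show "S \<noteq> {}" using False .
          fix s assume "s \<in> S"
          then obtain x' where x': "x' \<in> X" "0 < c x'" "s = (v - F x') / c x'" unfolding S_def by blast
          thus "s \<le> (F x - v) / (- c x)" using key[OF x'(1) x'(2) x 3] by simp
        qed
        moreover have "ineq \<Longrightarrow> 0 \<le> (F x - v) / (- c x)" 
        proof -
          assume "ineq" hence "v \<le> F x" using lb x 3 by auto
          thus ?thesis using 3 by (intro divide_nonneg_pos) auto
        qed
        ultimately have "lam \<le> (F x - v) / (- c x)" unfolding lam_def by auto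
        thus ?thesis using 3 by (simp add: field_simps)
      qed
    qed
    moreover have "ineq \<longrightarrow> 0 \<le> lam" unfolding lam_def by auto
    ultimately show ?thesis by blast
  qed
qed

lemma cvx_on_subset: "cvx_on S F \<Longrightarrow> T \<subseteq> S \<Longrightarrow> cvx_on T F"
  unfolding cvx_on_def by blast

lemma aff_on_subset: "aff_on S F \<Longrightarrow> T \<subseteq> S \<Longrightarrow> aff_on T F"
  unfolding aff_on_def by blast

lemma aff_cvx: "aff_on S F \<Longrightarrow> cvx_on S F"
  unfolding aff_on_def cvx_on_def by simp

lemma cvx_on_add:
  assumes "cvx_on S F" "cvx_on S G" "0 \<le> a"
  shows "cvx_on S (\<lambda>x. F x + a * G x)"
  unfolding cvx_on_def
proof (intro ballI allI impI)
  fix x y and t :: real assume xy: "x \<in> S" "y \<in> S" and t: "0 \<le> t \<and> t \<le> 1"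
  have "F (cmb t x y) \<le> t * F x + (1 - t) * F y" using assms(1) xy t unfolding cvx_on_def by blast
  moreover have "G (cmb t x y) \<le> t * G x + (1 - t) * G y" using assms(2) xy t unfolding cvx_on_def by blast
  hence "a * G (cmb t x y) \<le> a * (t * G x + (1 - t) * G y)" using assms(3) by (rule mult_left_mono)
  ultimately show "F (cmb t x y) + a * G (cmb t x y) \<le> t * (F x + a * G x) + (1 - t) * (F y + a * G y)"
    by (simp add: algebra_simps)
qed

lemma aff_on_add:
  assumes "cvx_on S F" "aff_on S G"
  shows "cvx_on S (\<lambda>x. F x + a * G x)"
  unfolding cvx_on_def
proof (intro ballI allI impI)
  fix x y and t :: real assume xy: "x \<in> S" "y \<in> S" and t: "0 \<le> t \<and> t \<le> 1"
  have "F (cmb t x y) \<le> t * F x + (1 - t) * F y" using assms(1) xy t unfolding cvx_on_def by blast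
  moreover have "G (cmb t x y) = t * G x + (1 - t) * G y" using assms(2) xy t unfolding aff_on_def by blast
  hence "a * G (cmb t x y) = t * (a * G x) + (1 - t) * (a * G y)" by (simp add: algebra_simps) (metis distrib_left)
  ultimately show "F (cmb t x y) + a * G (cmb t x y) \<le> t * (F x + a * G x) + (1 - t) * (F y + a * G y)"
    by (simp add: algebra_simps)
qed

definition feas :: "(nat \<Rightarrow> bool) \<Rightarrow> (nat \<Rightarrow> real vec \<Rightarrow> real) \<Rightarrow> nat \<Rightarrow> real vec \<Rightarrow> bool" where
  "feas ineq C j x \<longleftrightarrow> (if ineq j then C j x \<le> 0 else C j x = 0)"

lemma multiplier:
  assumes Om: "cvx_set \<Omega>"
    and Cc: "\<forall>j\<in>set js. cvx_on \<Omega> (C j)"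
    and Ca: "\<forall>j\<in>set js. \<not> ineq j \<longrightarrow> aff_on \<Omega> (C j)"
    and ord: "sorted_wrt (\<lambda>i j. ineq j \<longrightarrow> ineq i) js"
    and dist: "distinct js"
    and xb: "xb \<in> \<Omega>" "\<forall>j\<in>set js. if ineq j then C j xb < 0 else C j xb = 0"
    and core: "\<forall>x\<in>\<Omega>. \<exists>t>1. cmb t xb x \<in> \<Omega>"
  shows "cvx_on \<Omega> F \<Longrightarrow> (\<forall>x\<in>\<Omega>. (\<forall>j\<in>set js. feas ineq C j x) \<longrightarrow> v \<le> F x) \<Longrightarrow>
     \<exists>lam. (\<forall>j\<in>set js. ineq j \<longrightarrow> 0 \<le> lam j) \<and> (\<forall>x\<in>\<Omega>. v \<le> F x + (\<Sum>j\<in>set js. lam j * C j x))"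
  using Cc Ca ord dist xb(2)
proof (induction js arbitrary: F)
  case Nil
  thus ?case by auto
next
  case (Cons c cs)
  define X where "X = {x\<in>\<Omega>. \<forall>j\<in>set cs. feas ineq C j x}"
  have XO: "X \<subseteq> \<Omega>" unfolding X_def by blast
  have Xc: "cvx_set X" unfolding cvx_set_def
  proof (intro ballI allI impI)
    fix x y and t :: real assume x: "x \<in> X" and y: "y \<in> X" and t: "0 \<le> t \<and> t \<le> 1"
    have "cmb t x y \<in> \<Omega>" using Om x y t XO unfolding cvx_set_def by blast
    moreover have "feas ineq C j (cmb t x y)" if j: "j \<in> set cs" for j
    proof (cases "ineq j")
      case True
      have xO: "x \<in> \<Omega>" "y \<in> \<Omega>" using x y XO by auto
      have "cvx_on \<Omega> (C j)" using Cons.prems(3) j by simp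
      hence "C j (cmb t x y) \<le> t * C j x + (1 - t) * C j y" using xO t unfolding cvx_on_def by blast
      moreover have "C j x \<le> 0" "C j y \<le> 0" using x y j True unfolding X_def feas_def by auto
      moreover have "t * C j x \<le> 0" "(1 - t) * C j y \<le> 0" using calculation(2,3) t
        by (auto simp: mult_nonneg_nonpos)
      ultimately have "C j (cmb t x y) \<le> 0" by linarith
      thus ?thesis using True unfolding feas_def by simp
    next
      case False
      have xO: "x \<in> \<Omega>" "y \<in> \<Omega>" using x y XO by auto
      have "aff_on \<Omega> (C j)" using Cons.prems(4) j False by simp
      hence "C j (cmb t x y) = t * C j x + (1 - t) * C j y" using xO unfolding aff_on_def by blast
      moreover have "C j x = 0" "C j y = 0" using x y j False unfolding X_def feas_def by auto
      ultimately show ?thesis using False unfolding feas_def by simp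
    qed
    ultimately show "cmb t x y \<in> X" unfolding X_def by blast
  qed
  have xbX: "xb \<in> X" using xb(1) Cons.prems(7) unfolding X_def feas_def by (auto simp: less_imp_le)
  have "\<exists>lam. (ineq c \<longrightarrow> 0 \<le> lam) \<and> (\<forall>x\<in>X. v \<le> F x + lam * C c x)"
  proof (rule step1[OF Xc])
    show "cvx_on X F" using Cons.prems(1) XO by (rule cvx_on_subset)
    show "cvx_on X (C c)" using Cons.prems(3) XO cvx_on_subset by auto
    show "aff_on X (C c)" if "\<not> ineq c" using Cons.prems(4) XO aff_on_subset that by auto
    show "\<forall>x\<in>X. (if ineq c then C c x \<le> 0 else C c x = 0) \<longrightarrow> v \<le> F x"
      using Cons.prems(2) unfolding X_def feas_def by auto
    show "\<exists>x\<in>X. C c x < 0" if "ineq c" using xbX Cons.prems(7) that by auto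
    have refl: "\<exists>y\<in>X. C c y * C c x < 0" if ni: "\<not> ineq c" and x: "x \<in> X" "C c x \<noteq> 0" for x
    proof -
      obtain t where t: "t > 1" "cmb t xb x \<in> \<Omega>" using core x XO by blast
      have alleq: "\<forall>j\<in>set (c # cs). \<not> ineq j" using Cons.prems(5) ni by auto
      have affj: "C j (cmb t xb x) = t * C j xb + (1 - t) * C j x" if "j \<in> set (c # cs)" for j
        using Cons.prems(4) alleq that xb(1) x XO unfolding aff_on_def by blast
      have "cmb t xb x \<in> X"
        unfolding X_def feas_def using t alleq affj Cons.prems(7) x unfolding X_def feas_def by auto
      moreover have "C c (cmb t xb x) = (1 - t) * C c x" using affj[of c] Cons.prems(7) ni by simp
      moreover have "(1 - t) * C c x * C c x < 0"
      proof -
        have "0 < C c x * C c x" using x(2) by (simp add: zero_less_mult_iff) linarith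
        thus ?thesis using t(1) by (simp add: mult.assoc mult_neg_pos)
      qed
      ultimately show ?thesis by (intro bexI[of _ "cmb t xb x"]) auto
    qed
    show "\<forall>x\<in>X. 0 < C c x \<longrightarrow> (\<exists>y\<in>X. C c y < 0)" if "\<not> ineq c"
    proof (intro ballI impI)
      fix x assume xx: "x \<in> X" "0 < C c x"
      have "\<exists>y\<in>X. C c y * C c x < 0" using refl[OF that xx(1)] xx(2) by simp
      then obtain y where "y \<in> X" "C c y * C c x < 0" by blast
      thus "\<exists>y\<in>X. C c y < 0" using \<open>0 < C c x\<close> by (auto simp: mult_less_0_iff)
    qed
    show "\<forall>x\<in>X. C c x < 0 \<longrightarrow> (\<exists>y\<in>X. 0 < C c y)" if "\<not> ineq c"
    proof (intro ballI impI)
      fix x assume xx: "x \<in> X" "C c x < 0"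
      have "\<exists>y\<in>X. C c y * C c x < 0" using refl[OF that xx(1)] xx(2) by simp
      then obtain y where "y \<in> X" "C c y * C c x < 0" by blast
      thus "\<exists>y\<in>X. 0 < C c y" using \<open>C c x < 0\<close> by (auto simp: mult_less_0_iff)
    qed
  qed
  then obtain lam0 where lam0: "ineq c \<longrightarrow> 0 \<le> lam0" "\<forall>x\<in>X. v \<le> F x + lam0 * C c x" by blast
  define F' where "F' = (\<lambda>x. F x + lam0 * C c x)"
  have cF': "cvx_on \<Omega> F'"
  proof (cases "ineq c")
    case True thus ?thesis unfolding F'_def using cvx_on_add[OF Cons.prems(1)] Cons.prems(3) lam0(1) by auto
  next
    case False thus ?thesis unfolding F'_def using aff_on_add[OF Cons.prems(1)] Cons.prems(4) by auto
  qed
  have "\<forall>x\<in>\<Omega>. (\<forall>j\<in>set cs. feas ineq C j x) \<longrightarrow> v \<le> F' x"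
    using lam0(2) unfolding X_def F'_def by auto
  then obtain lam where lam: "\<forall>j\<in>set cs. ineq j \<longrightarrow> 0 \<le> lam j"
      "\<forall>x\<in>\<Omega>. v \<le> F' x + (\<Sum>j\<in>set cs. lam j * C j x)"
    using Cons.IH[OF cF'] Cons.prems(3-7) by auto
  define lam' where "lam' = lam(c := lam0)"
  have cnot: "c \<notin> set cs" using Cons.prems(6) by simp
  have "(\<Sum>j\<in>set (c # cs). lam' j * C j x) = lam0 * C c x + (\<Sum>j\<in>set cs. lam j * C j x)" for x
  proof -
    have "(\<Sum>j\<in>set cs. lam' j * C j x) = (\<Sum>j\<in>set cs. lam j * C j x)"
      using cnot unfolding lam'_def by (intro sum.cong) auto
    thus ?thesis using cnot by (simp add: lam'_def)
  qed
  hence "\<forall>x\<in>\<Omega>. v \<le> F x + (\<Sum>j\<in>set (c # cs). lam' j * C j x)"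
    using lam(2) unfolding F'_def by (simp add: add.assoc)
  moreover have "\<forall>j\<in>set (c # cs). ineq j \<longrightarrow> 0 \<le> lam' j" using lam(1) lam0(1) unfolding lam'_def by auto
  ultimately show ?case by blast
qed

abbreviation blk :: "(nat \<Rightarrow> nat) \<Rightarrow> real vec \<Rightarrow> nat \<Rightarrow> real vec" where
  "blk nn x i \<equiv> block x (offs nn i) (nn i)"

definition Gs where
  "Gs m nn p q A b g x = sumv (p+q) (\<lambda>i. Gfun A b g i (blk nn x i)) {..<m}"

definition Om where
  "Om m nn \<Omega> = {x \<in> carrier_vec (\<Sum>i<m. nn i). \<forall>i<m. blk nn x i \<in> \<Omega> i}"

lemma block_carrier[simp]: "block x off d \<in> carrier_vec d"
  unfolding block_def by simp

lemma block_dim[simp]: "dim_vec (block x off d) = d"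
  unfolding block_def by simp

lemma block_index[simp]: "j < d \<Longrightarrow> block x off d $ j = x $ (off + j)"
  unfolding block_def by simp

lemma offs_le: "i < m \<Longrightarrow> offs nn i + nn i \<le> (\<Sum>i<m. nn i)"
proof -
  assume i: "i < m"
  have "offs nn i + nn i = (\<Sum>k<Suc i. nn k)" unfolding offs_def by simp
  also have "\<dots> \<le> (\<Sum>k<m. nn k)" using i by (intro sum_mono2) auto
  finally show ?thesis .
qed

lemma cmb_carrier[simp]: "x \<in> carrier_vec n \<Longrightarrow> y \<in> carrier_vec n \<Longrightarrow> cmb t x y \<in> carrier_vec n"
  unfolding cmb_def by auto

lemma cmb_index: "x \<in> carrier_vec n \<Longrightarrow> y \<in> carrier_vec n \<Longrightarrow> j < n \<Longrightarrow> cmb t x y $ j = t * x $ j + (1 - t) * y $ j"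
  unfolding cmb_def by auto

lemma block_cmb:
  assumes "x \<in> carrier_vec n" "y \<in> carrier_vec n" "off + d \<le> n"
  shows "block (cmb t x y) off d = cmb t (block x off d) (block y off d)"
  unfolding cmb_def by (rule eq_vecI) (use assms in \<open>auto simp: carrier_vecD\<close>)

lemma sumv_index: "j < d \<Longrightarrow> sumv d F I $ j = (\<Sum>i\<in>I. F i $ j)"
  unfolding sumv_def by simp

lemma sumv_carrier[simp]: "sumv d F I \<in> carrier_vec d"
  unfolding sumv_def by simp

lemma Gs_carrier[simp]: "Gs m nn p q A b g x \<in> carrier_vec (p+q)"
  unfolding Gs_def by simp

lemma Gs_dim[simp]: "dim_vec (Gs m nn p q A b g x) = p+q"
  unfolding Gs_def sumv_def by simp

lemma Gs_index: "j < p+q \<Longrightarrow> Gs m nn p q A b g x $ j = (\<Sum>i<m. Gfun A b g i (blk nn x i) $ j)"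
  unfolding Gs_def by (simp add: sumv_index)

lemma Gfun_index_lo:
  assumes "A i \<in> carrier_mat p n" "b i \<in> carrier_vec p" "g i xi \<in> carrier_vec q" "xi \<in> carrier_vec n" "j < p"
  shows "Gfun A b g i xi $ j = row (A i) j \<bullet> xi - b i $ j"
  using assms unfolding Gfun_def by (auto simp: index_append_vec)

lemma Gfun_index_hi:
  assumes "A i \<in> carrier_mat p n" "b i \<in> carrier_vec p" "g i xi \<in> carrier_vec q" "xi \<in> carrier_vec n"
    "p \<le> j" "j < p + q"
  shows "Gfun A b g i xi $ j = g i xi $ (j - p)"
  using assms unfolding Gfun_def by (auto simp: index_append_vec)

lemma Gfun_carrier:
  assumes "A i \<in> carrier_mat p n" "b i \<in> carrier_vec p" "g i xi \<in> carrier_vec q"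
  shows "Gfun A b g i xi \<in> carrier_vec (p+q)"
proof -
  have "dim_vec (A i *\<^sub>v xi - b i) = p" using assms(2) by simp
  moreover have "dim_vec (g i xi) = q" using assms(3) by simp
  ultimately show ?thesis unfolding Gfun_def carrier_vec_def by simp
qed

lemma cmb_vec_expand: "t \<cdot>\<^sub>v x + (1 - t) \<cdot>\<^sub>v y = cmb t x y"
  unfolding cmb_def by simp

lemma Om_carrier: "x \<in> Om m nn \<Omega> \<Longrightarrow> x \<in> carrier_vec (\<Sum>i<m. nn i)"
  unfolding Om_def by auto

lemma blk_cmb:
  assumes "x \<in> carrier_vec (\<Sum>i<m. nn i)" "y \<in> carrier_vec (\<Sum>i<m. nn i)" "i < m"
  shows "blk nn (cmb t x y) i = cmb t (blk nn x i) (blk nn y i)"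
  using block_cmb[OF assms(1,2) offs_le[OF assms(3)]] .

lemma Om_cvx:
  assumes "\<forall>i<m. convex_set_vec (nn i) (\<Omega> i)"
  shows "cvx_set (Om m nn \<Omega>)"
  unfolding cvx_set_def
proof (intro ballI allI impI)
  fix x y and t :: real assume x: "x \<in> Om m nn \<Omega>" and y: "y \<in> Om m nn \<Omega>" and t: "0 \<le> t \<and> t \<le> 1"
  have xc: "x \<in> carrier_vec (\<Sum>i<m. nn i)" and yc: "y \<in> carrier_vec (\<Sum>i<m. nn i)"
    using x y unfolding Om_def by auto
  have "blk nn (cmb t x y) i \<in> \<Omega> i" if i: "i < m" for i
  proof -
    have "blk nn x i \<in> \<Omega> i" "blk nn y i \<in> \<Omega> i" using x y i unfolding Om_def by auto
    hence "cmb t (blk nn x i) (blk nn y i) \<in> \<Omega> i"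
      using assms i t unfolding convex_set_vec_def cmb_vec_expand by blast
    thus ?thesis using blk_cmb[OF xc yc i] by simp
  qed
  thus "cmb t x y \<in> Om m nn \<Omega>" unfolding Om_def using xc yc by auto
qed

lemma objP_cvx:
  assumes "\<forall>i<m. convex_fun_vec (nn i) (f i)"
  shows "cvx_on (carrier_vec (\<Sum>i<m. nn i)) (objP m nn f)"
  unfolding cvx_on_def
proof (intro ballI allI impI)
  fix x y :: "real vec" and t :: real assume xc: "x \<in> carrier_vec (\<Sum>i<m. nn i)" and yc: "y \<in> carrier_vec (\<Sum>i<m. nn i)"
    and t: "0 \<le> t \<and> t \<le> 1"
  have "objP m nn f (cmb t x y) = (\<Sum>i<m. f i (cmb t (blk nn x i) (blk nn y i)))"
    unfolding objP_def using blk_cmb[OF xc yc] by simp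
  also have "\<dots> \<le> (\<Sum>i<m. t * f i (blk nn x i) + (1 - t) * f i (blk nn y i))"
  proof (rule sum_mono)
    fix i assume "i \<in> {..<m}"
    thus "f i (cmb t (blk nn x i) (blk nn y i)) \<le> t * f i (blk nn x i) + (1 - t) * f i (blk nn y i)"
      using assms t unfolding convex_fun_vec_def cmb_vec_expand by auto
  qed
  also have "\<dots> = t * objP m nn f x + (1 - t) * objP m nn f y"
    unfolding objP_def by (simp add: sum.distrib sum_distrib_left)
  finally show "objP m nn f (cmb t x y) \<le> t * objP m nn f x + (1 - t) * objP m nn f y" .
qed

lemma Gs_aff:
  assumes A_dim: "\<forall>i<m. A i \<in> carrier_mat p (nn i)" and b_dim: "\<forall>i<m. b i \<in> carrier_vec p"
    and g_dim: "\<forall>i<m. \<forall>xi\<in>carrier_vec (nn i). g i xi \<in> carrier_vec q"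
    and j: "j < p"
  shows "aff_on (carrier_vec (\<Sum>i<m. nn i)) (\<lambda>x. Gs m nn p q A b g x $ j)"
  unfolding aff_on_def
proof (intro ballI allI)
  fix x y :: "real vec" and t :: real assume xc: "x \<in> carrier_vec (\<Sum>i<m. nn i)" and yc: "y \<in> carrier_vec (\<Sum>i<m. nn i)"
  have e: "Gfun A b g i (blk nn z i) $ j = row (A i) j \<bullet> blk nn z i - b i $ j" if "i < m" for i z
  proof -
    have "A i \<in> carrier_mat p (nn i)" "b i \<in> carrier_vec p" "g i (blk nn z i) \<in> carrier_vec q"
      using A_dim b_dim g_dim that by auto
    from Gfun_index_lo[where A=A and b=b and g=g and i=i, OF this block_carrier j] show ?thesis .
  qed
  have r: "row (A i) j \<in> carrier_vec (nn i)" if "i < m" for i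
  proof -
    have "dim_col (A i) = nn i" using A_dim that by auto
    thus ?thesis by (simp add: row_def)
  qed
  have "Gs m nn p q A b g (cmb t x y) $ j = (\<Sum>i<m. row (A i) j \<bullet> blk nn (cmb t x y) i - b i $ j)"
    using j by (simp add: Gs_index e)
  also have "\<dots> = (\<Sum>i<m. row (A i) j \<bullet> cmb t (blk nn x i) (blk nn y i) - b i $ j)"
    by (simp add: blk_cmb[OF xc yc])
  also have "\<dots> = (\<Sum>i<m. t * (row (A i) j \<bullet> blk nn x i - b i $ j) + (1 - t) * (row (A i) j \<bullet> blk nn y i - b i $ j))"
  proof (rule sum.cong[OF refl])
    fix i assume i: "i \<in> {..<m}"
    have "row (A i) j \<bullet> cmb t (blk nn x i) (blk nn y i) = t * (row (A i) j \<bullet> blk nn x i) + (1 - t) * (row (A i) j \<bullet> blk nn y i)"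
      unfolding cmb_def using r[of i] i
      by (simp add: scalar_prod_add_distrib[of _ "nn i"] scalar_prod_smult_distrib[of _ "nn i"])
    thus "row (A i) j \<bullet> cmb t (blk nn x i) (blk nn y i) - b i $ j = t * (row (A i) j \<bullet> blk nn x i - b i $ j) + (1 - t) * (row (A i) j \<bullet> blk nn y i - b i $ j)"
      by (simp add: algebra_simps)
  qed
  also have "\<dots> = t * Gs m nn p q A b g x $ j + (1 - t) * Gs m nn p q A b g y $ j"
    using j by (simp add: Gs_index e sum.distrib sum_distrib_left)
  finally show "Gs m nn p q A b g (cmb t x y) $ j = t * Gs m nn p q A b g x $ j + (1 - t) * Gs m nn p q A b g y $ j" .
qed

lemma Gs_cvx:
  assumes A_dim: "\<forall>i<m. A i \<in> carrier_mat p (nn i)" and b_dim: "\<forall>i<m. b i \<in> carrier_vec p"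
    and g_dim: "\<forall>i<m. \<forall>xi\<in>carrier_vec (nn i). g i xi \<in> carrier_vec q"
    and g_cvx: "\<forall>i<m. \<forall>j<q. proper_closed_convex_vec (nn i) (\<lambda>xi. g i xi $ j)"
    and j: "p \<le> j" "j < p + q"
  shows "cvx_on (carrier_vec (\<Sum>i<m. nn i)) (\<lambda>x. Gs m nn p q A b g x $ j)"
  unfolding cvx_on_def
proof (intro ballI allI impI)
  fix x y :: "real vec" and t :: real assume xc: "x \<in> carrier_vec (\<Sum>i<m. nn i)" and yc: "y \<in> carrier_vec (\<Sum>i<m. nn i)"
    and t: "0 \<le> t \<and> t \<le> 1"
  have e: "Gfun A b g i (blk nn z i) $ j = g i (blk nn z i) $ (j - p)" if "i < m" for i z
  proof -
    have "A i \<in> carrier_mat p (nn i)" "b i \<in> carrier_vec p" "g i (blk nn z i) \<in> carrier_vec q"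
      using A_dim b_dim g_dim that by auto
    from Gfun_index_hi[where A=A and b=b and g=g and i=i, OF this block_carrier j] show ?thesis .
  qed
  have "Gs m nn p q A b g (cmb t x y) $ j = (\<Sum>i<m. g i (blk nn (cmb t x y) i) $ (j - p))"
    using j by (simp add: Gs_index e)
  also have "\<dots> = (\<Sum>i<m. g i (cmb t (blk nn x i) (blk nn y i)) $ (j - p))"
    by (simp add: blk_cmb[OF xc yc])
  also have "\<dots> \<le> (\<Sum>i<m. t * g i (blk nn x i) $ (j - p) + (1 - t) * g i (blk nn y i) $ (j - p))"
  proof (rule sum_mono)
    fix i assume i: "i \<in> {..<m}"
    have "convex_fun_vec (nn i) (\<lambda>xi. g i xi $ (j - p))" using g_cvx i j unfolding proper_closed_convex_vec_def by auto
    thus "g i (cmb t (blk nn x i) (blk nn y i)) $ (j - p) \<le> t * g i (blk nn x i) $ (j - p) + (1 - t) * g i (blk nn y i) $ (j - p)"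
      using t unfolding convex_fun_vec_def cmb_vec_expand by auto
  qed
  also have "\<dots> = t * Gs m nn p q A b g x $ j + (1 - t) * Gs m nn p q A b g y $ j"
    using j by (simp add: Gs_index e sum.distrib sum_distrib_left)
  finally show "Gs m nn p q A b g (cmb t x y) $ j \<le> t * Gs m nn p q A b g x $ j + (1 - t) * Gs m nn p q A b g y $ j" .
qed

lemma Om_core:
  assumes m: "0 < m" and xbc: "xb \<in> carrier_vec (\<Sum>i<m. nn i)"
    and int: "\<forall>i<m. blk nn xb i \<in> interior_vec (nn i) (\<Omega> i)"
  shows "\<forall>x\<in>Om m nn \<Omega>. \<exists>t>1. cmb t xb x \<in> Om m nn \<Omega>"
proof
  fix x assume x: "x \<in> Om m nn \<Omega>"
  have xc: "x \<in> carrier_vec (\<Sum>i<m. nn i)" using x unfolding Om_def by auto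
  have "\<forall>i<m. \<exists>e>0. \<forall>z\<in>carrier_vec (nn i). (\<Sum>j<nn i. (z $ j - blk nn xb i $ j)^2) < e^2 \<longrightarrow> z \<in> \<Omega> i"
    using int unfolding interior_vec_def by blast
  then obtain E where E: "\<And>i. i < m \<Longrightarrow> E i > 0"
    "\<And>i z. i < m \<Longrightarrow> z \<in> carrier_vec (nn i) \<Longrightarrow> (\<Sum>j<nn i. (z $ j - blk nn xb i $ j)^2) < (E i)^2 \<Longrightarrow> z \<in> \<Omega> i"
    by metis
  define D where "D i = (\<Sum>j<nn i. (blk nn xb i $ j - blk nn x i $ j)^2)" for i
  define Dt where "Dt = (\<Sum>i<m. D i)"
  have D0: "0 \<le> D i" for i unfolding D_def by (intro sum_nonneg) auto
  have DDt: "D i \<le> Dt" if "i < m" for i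
    unfolding Dt_def using that D0 by (intro member_le_sum) auto
  have Dt0: "0 \<le> Dt" unfolding Dt_def using D0 by (intro sum_nonneg) auto
  define em where "em = Min (E ` {..<m})"
  have em0: "0 < em" unfolding em_def using m E(1) by (subst Min_gr_iff) auto
  have emE: "em \<le> E i" if "i < m" for i unfolding em_def using that by (intro Min_le) auto
  define s where "s = em / (1 + Dt)"
  have s0: "0 < s" unfolding s_def using em0 Dt0 by simp
  have sD: "s * s * Dt < em * em"
  proof -
    have e: "em = s * (1 + Dt)" unfolding s_def using Dt0 by simp
    have "Dt < (1 + Dt) * (1 + Dt)" using Dt0 by (simp add: algebra_simps) (smt (verit) mult_nonneg_nonneg)
    hence "s * s * Dt < s * s * ((1 + Dt) * (1 + Dt))" using s0 by simp
    thus ?thesis unfolding e by (simp add: algebra_simps)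
  qed
  define t where "t = 1 + s"
  have "cmb t xb x \<in> Om m nn \<Omega>"
    unfolding Om_def
  proof (intro CollectI conjI allI impI)
    show "cmb t xb x \<in> carrier_vec (\<Sum>i<m. nn i)" using xbc xc by simp
    fix i assume i: "i < m"
    have z: "blk nn (cmb t xb x) i = cmb t (blk nn xb i) (blk nn x i)" using blk_cmb[OF xbc xc i] .
    have "(\<Sum>j<nn i. (cmb t (blk nn xb i) (blk nn x i) $ j - blk nn xb i $ j)^2) = s * s * D i"
      unfolding D_def sum_distrib_left
      by (intro sum.cong refl) (simp add: cmb_index[OF block_carrier block_carrier] t_def power2_eq_square algebra_simps)
    also have "\<dots> \<le> s * s * Dt" using DDt[OF i] s0 by (simp add: mult_left_mono)
    also have "\<dots> < em * em" by (rule sD)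
    also have "\<dots> \<le> (E i)^2" using emE[OF i] em0 by (simp add: power2_eq_square mult_mono)
    finally show "blk nn (cmb t xb x) i \<in> \<Omega> i" unfolding z using E(2)[OF i] by simp
  qed
  moreover have "t > 1" unfolding t_def using s0 by simp
  ultimately show "\<exists>t>1. cmb t xb x \<in> Om m nn \<Omega>" by blast
qed

lemma sorted_wrt_all: "(\<And>x y. x \<in> set xs \<Longrightarrow> y \<in> set xs \<Longrightarrow> P x y) \<Longrightarrow> sorted_wrt P xs"
  by (induction xs) auto

lemma Gfun_index_lo':
  assumes "b i \<in> carrier_vec p" "g i xi \<in> carrier_vec q" "j < p"
  shows "Gfun A b g i xi $ j = (A i *\<^sub>v xi - b i) $ j"
  using assms unfolding Gfun_def by (auto simp: index_append_vec)

lemma strong_dual: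
  assumes m: "0 < m"
    and A_dim: "\<forall>i<m. A i \<in> carrier_mat p (nn i)" and b_dim: "\<forall>i<m. b i \<in> carrier_vec p"
    and g_dim: "\<forall>i<m. \<forall>xi\<in>carrier_vec (nn i). g i xi \<in> carrier_vec q"
    and f_cvx: "\<forall>i<m. proper_closed_convex_vec (nn i) (f i)"
    and g_cvx: "\<forall>i<m. \<forall>j<q. proper_closed_convex_vec (nn i) (\<lambda>xi. g i xi $ j)"
    and \<Omega>_cvx: "\<forall>i<m. convex_set_vec (nn i) (\<Omega> i)"
    and slater: "\<exists>xb\<in>carrier_vec (\<Sum>i<m. nn i).
        (\<forall>i<m. block xb (offs nn i) (nn i) \<in> interior_vec (nn i) (\<Omega> i)) \<and>
        sumv p (\<lambda>i. A i *\<^sub>v block xb (offs nn i) (nn i) - b i) {..<m} = 0\<^sub>v p \<and>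
        (\<forall>j<q. (\<Sum>i<m. g i (block xb (offs nn i) (nn i)) $ j) < 0)"
    and v: "\<forall>z. feasibleP m nn p q A b g \<Omega> z \<longrightarrow> v \<le> objP m nn f z"
  shows "\<exists>ys\<in>Kpolar p q. \<forall>z\<in>Om m nn \<Omega>. v \<le> objP m nn f z + ys \<bullet> Gs m nn p q A b g z"
proof -
  obtain xb where xbc: "xb \<in> carrier_vec (\<Sum>i<m. nn i)"
    and xbi: "\<forall>i<m. blk nn xb i \<in> interior_vec (nn i) (\<Omega> i)"
    and xbA: "sumv p (\<lambda>i. A i *\<^sub>v blk nn xb i - b i) {..<m} = 0\<^sub>v p"
    and xbg: "\<forall>j<q. (\<Sum>i<m. g i (blk nn xb i) $ j) < 0"
    using slater by blast
  define C where "C j x = Gs m nn p q A b g x $ j" for j x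
  define ineq where "ineq j = (p \<le> j)" for j
  define js where "js = [p..<p+q] @ [0..<p]"
  have setjs: "set js = {..<p+q}" unfolding js_def by auto
  have OmC: "Om m nn \<Omega> \<subseteq> carrier_vec (\<Sum>i<m. nn i)" unfolding Om_def by auto
  have eqj: "aff_on (Om m nn \<Omega>) (C j)" if "j < p" for j
    unfolding C_def using Gs_aff[OF A_dim b_dim g_dim that] OmC by (rule aff_on_subset)
  have inj: "cvx_on (Om m nn \<Omega>) (C j)" if "p \<le> j" "j < p + q" for j
    unfolding C_def using Gs_cvx[OF A_dim b_dim g_dim g_cvx that] OmC by (rule cvx_on_subset)
  have f_cvx': "\<forall>i<m. convex_fun_vec (nn i) (f i)" using f_cvx unfolding proper_closed_convex_vec_def by auto
  have xbO: "xb \<in> Om m nn \<Omega>" unfolding Om_def using xbc xbi unfolding interior_vec_def by auto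
  have xbC: "\<forall>j\<in>set js. if ineq j then C j xb < 0 else C j xb = 0"
  proof
    fix j assume "j \<in> set js"
    hence j: "j < p + q" using setjs by auto
    show "if ineq j then C j xb < 0 else C j xb = 0"
    proof (cases "p \<le> j")
      case True
      have e: "Gfun A b g i (blk nn xb i) $ j = g i (blk nn xb i) $ (j - p)" if "i < m" for i
      proof -
        have "A i \<in> carrier_mat p (nn i)" "b i \<in> carrier_vec p" "g i (blk nn xb i) \<in> carrier_vec q"
          using A_dim b_dim g_dim that by auto
        from Gfun_index_hi[where A=A and b=b and g=g and i=i, OF this block_carrier True j] show ?thesis .
      qed
      have "C j xb = (\<Sum>i<m. g i (blk nn xb i) $ (j - p))" unfolding C_def using j by (simp add: Gs_index e)
      also have "\<dots> < 0" using xbg True j by auto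
      finally show ?thesis using True unfolding ineq_def by simp
    next
      case False
      hence jp: "j < p" by simp
      have e: "Gfun A b g i (blk nn xb i) $ j = (A i *\<^sub>v blk nn xb i - b i) $ j" if "i < m" for i
        using Gfun_index_lo'[of b i p g "blk nn xb i" q j A] b_dim g_dim that jp by auto
      have "C j xb = (\<Sum>i<m. (A i *\<^sub>v blk nn xb i - b i) $ j)" unfolding C_def using j by (simp add: Gs_index e)
      also have "\<dots> = sumv p (\<lambda>i. A i *\<^sub>v blk nn xb i - b i) {..<m} $ j" using jp by (simp add: sumv_index)
      also have "\<dots> = 0" using xbA jp by simp
      finally show ?thesis using False unfolding ineq_def by simp
    qed
  qed
  have core: "\<forall>x\<in>Om m nn \<Omega>. \<exists>t>1. cmb t xb x \<in> Om m nn \<Omega>" using Om_core[OF m xbc xbi] .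
  have Fc: "cvx_on (Om m nn \<Omega>) (objP m nn f)" using objP_cvx[OF f_cvx'] OmC by (rule cvx_on_subset)
  have Fv: "\<forall>x\<in>Om m nn \<Omega>. (\<forall>j\<in>set js. feas ineq C j x) \<longrightarrow> v \<le> objP m nn f x"
  proof (intro ballI impI)
    fix x assume x: "x \<in> Om m nn \<Omega>" and fx: "\<forall>j\<in>set js. feas ineq C j x"
    have "Gs m nn p q A b g x \<in> Kcone p q"
      using fx unfolding Kcone_def setjs feas_def ineq_def C_def by auto
    hence "feasibleP m nn p q A b g \<Omega> x" using x unfolding feasibleP_def Om_def Gs_def by auto
    thus "v \<le> objP m nn f x" using v by auto
  qed
  have Cc: "\<forall>j\<in>set js. cvx_on (Om m nn \<Omega>) (C j)"
    using eqj inj aff_cvx unfolding setjs by (metis lessThan_iff not_le)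
  have Ca: "\<forall>j\<in>set js. \<not> ineq j \<longrightarrow> aff_on (Om m nn \<Omega>) (C j)"
    using eqj unfolding ineq_def by auto
  have ord: "sorted_wrt (\<lambda>i j. ineq j \<longrightarrow> ineq i) js"
    unfolding js_def sorted_wrt_append by (auto simp: ineq_def intro!: sorted_wrt_all)
  have dist: "distinct js" unfolding js_def by auto
  obtain lam where lam: "\<forall>j\<in>set js. ineq j \<longrightarrow> 0 \<le> lam j"
    "\<forall>x\<in>Om m nn \<Omega>. v \<le> objP m nn f x + (\<Sum>j\<in>set js. lam j * C j x)"
    using multiplier[OF Om_cvx[OF \<Omega>_cvx] Cc Ca ord dist xbO xbC core Fc Fv] by blast
  define ys where "ys = vec (p+q) lam"
  have "ys \<in> Kpolar p q" using lam(1) unfolding ys_def Kpolar_def setjs ineq_def by auto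
  moreover have yG: "ys \<bullet> Gs m nn p q A b g z = (\<Sum>j\<in>set js. lam j * C j z)" for z
    unfolding scalar_prod_def setjs C_def ys_def by (simp add: atLeast0LessThan)
  ultimately show ?thesis using lam(2) by (metis yG)
qed

lemma ereal_sum_Minf:
  fixes f :: "'a \<Rightarrow> ereal"
  assumes "finite I" "\<forall>i\<in>I. f i \<noteq> \<infinity>" "\<exists>i\<in>I. f i = -\<infinity>"
  shows "sum f I = -\<infinity>"
  using assms
proof (induction I rule: finite_induct)
  case empty thus ?case by simp
next
  case (insert a F)
  have sF: "sum f F \<noteq> \<infinity>" using insert.prems(1) insert.hyps(1) by (simp add: sum_Pinfty)
  show ?case
  proof (cases "f a = -\<infinity>")
    case True thus ?thesis using insert.hyps sF by simp
  next
    case False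
    hence "sum f F = -\<infinity>" using insert by auto
    thus ?thesis using insert.hyps insert.prems(1) by simp
  qed
qed

lemma ereal_sum_fin:
  fixes f :: "'a \<Rightarrow> ereal"
  assumes "finite I" "\<bar>sum f I\<bar> \<noteq> \<infinity>" "i \<in> I"
  shows "\<bar>f i\<bar> \<noteq> \<infinity>"
proof
  assume a: "\<bar>f i\<bar> = \<infinity>"
  show False
  proof (cases "\<exists>k\<in>I. f k = \<infinity>")
    case True hence "sum f I = \<infinity>" using assms(1) sum_Pinfty[of f I] by blast
    thus False using assms(2) by simp
  next
    case False
    hence "f i = -\<infinity>" using a assms(3) by (cases "f i") auto
    hence "sum f I = -\<infinity>" using ereal_sum_Minf[OF assms(1)] False assms(3) by blast
    thus False using assms(2) by simp
  qed
qed

lemma lagr_fin: "xi \<in> \<Omega> i \<Longrightarrow> y \<in> Kpolar p q \<Longrightarrow>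
  lagr_i p q f A b g \<Omega> i xi y = ereal (f i xi + y \<bullet> Gfun A b g i xi)"
  unfolding lagr_i_def indic_def by (simp add: zero_ereal_def)

lemma lagr_notO: "xi \<notin> \<Omega> i \<Longrightarrow> lagr_i p q f A b g \<Omega> i xi y = \<infinity>"
  unfolding lagr_i_def indic_def by (cases "y \<in> Kpolar p q") (auto simp: zero_ereal_def)

lemma lagr_notK: "xi \<in> \<Omega> i \<Longrightarrow> y \<notin> Kpolar p q \<Longrightarrow> lagr_i p q f A b g \<Omega> i xi y = -\<infinity>"
  unfolding lagr_i_def indic_def by (simp add: zero_ereal_def)

lemma kron_ones_dim[simp]: "dim_vec (kron_vec (ones_vec m) y) = m * dim_vec y"
  unfolding kron_vec_def ones_vec_def by simp

lemma kron_ones_index: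
  assumes "i < m" "j < dim_vec y"
  shows "kron_vec (ones_vec m) y $ (i * dim_vec y + j) = y $ j"
proof -
  have lt: "i * dim_vec y + j < m * dim_vec y"
  proof -
    have "i * dim_vec y + j < (i + 1) * dim_vec y" using assms by simp
    also have "\<dots> \<le> m * dim_vec y" using assms by (intro mult_right_mono) auto
    finally show ?thesis .
  qed
  have d: "(i * dim_vec y + j) div dim_vec y = i" "(i * dim_vec y + j) mod dim_vec y = j"
    using assms(2) by (metis add.commute add_cancel_right_right div_less div_mult_self2 mult.commute not_less0, simp)
  show ?thesis unfolding kron_vec_def ones_vec_def using lt d assms by simp
qed

lemma kron_ones_block:
  assumes "i < m" "y \<in> carrier_vec d"
  shows "block (kron_vec (ones_vec m) y) (i * d) d = y"
proof (intro eq_vecI)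
  have dy: "dim_vec y = d" using assms(2) by simp
  fix j assume "j < dim_vec y"
  thus "block (kron_vec (ones_vec m) y) (i * d) d $ j = y $ j"
    using kron_ones_index[OF assms(1), of j y] dy by simp
qed (use assms in simp)

lemma Lagr_kron:
  assumes "y \<in> carrier_vec (p+q)"
  shows "Lagr m nn p q f A b g \<Omega> x (kron_vec (ones_vec m) y) = (\<Sum>i<m. lagr_i p q f A b g \<Omega> i (blk nn x i) y)"
  unfolding Lagr_def using kron_ones_block[OF _ assms] by simp

lemma Gs_scalar:
  assumes A_dim: "\<forall>i<m. A i \<in> carrier_mat p (nn i)" and b_dim: "\<forall>i<m. b i \<in> carrier_vec p"
    and g_dim: "\<forall>i<m. \<forall>xi\<in>carrier_vec (nn i). g i xi \<in> carrier_vec q"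
    and y: "y \<in> carrier_vec (p+q)"
  shows "y \<bullet> Gs m nn p q A b g x = (\<Sum>i<m. y \<bullet> Gfun A b g i (blk nn x i))"
proof -
  have dG: "dim_vec (Gfun A b g i (blk nn x i)) = p + q" if "i < m" for i
    using Gfun_carrier[of A i p "nn i" b g "blk nn x i" q] A_dim b_dim g_dim that by auto
  have "y \<bullet> Gs m nn p q A b g x = (\<Sum>j\<in>{0..<p+q}. y $ j * (\<Sum>i<m. Gfun A b g i (blk nn x i) $ j))"
    unfolding scalar_prod_def by (simp add: Gs_index)
  also have "\<dots> = (\<Sum>i<m. \<Sum>j\<in>{0..<p+q}. y $ j * Gfun A b g i (blk nn x i) $ j)"
    by (simp add: sum_distrib_left sum.swap[of _ "{0..<p+q}"])
  also have "\<dots> = (\<Sum>i<m. y \<bullet> Gfun A b g i (blk nn x i))"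
    unfolding scalar_prod_def using dG by simp
  finally show ?thesis .
qed

lemma Kpolar_carrier: "y \<in> Kpolar p q \<Longrightarrow> y \<in> carrier_vec (p+q)"
  unfolding Kpolar_def by auto

lemma objGs_sum:
  assumes A_dim: "\<forall>i<m. A i \<in> carrier_mat p (nn i)" and b_dim: "\<forall>i<m. b i \<in> carrier_vec p"
    and g_dim: "\<forall>i<m. \<forall>xi\<in>carrier_vec (nn i). g i xi \<in> carrier_vec q"
    and y: "y \<in> carrier_vec (p+q)"
  shows "objP m nn f z + y \<bullet> Gs m nn p q A b g z = (\<Sum>i<m. f i (blk nn z i) + y \<bullet> Gfun A b g i (blk nn z i))"
  unfolding objP_def Gs_scalar[OF A_dim b_dim g_dim y] by (simp add: sum.distrib)

lemma Lagr_Om: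
  assumes A_dim: "\<forall>i<m. A i \<in> carrier_mat p (nn i)" and b_dim: "\<forall>i<m. b i \<in> carrier_vec p"
    and g_dim: "\<forall>i<m. \<forall>xi\<in>carrier_vec (nn i). g i xi \<in> carrier_vec q"
    and x: "x \<in> Om m nn \<Omega>" and y: "y \<in> Kpolar p q"
  shows "Lagr m nn p q f A b g \<Omega> x (kron_vec (ones_vec m) y) = ereal (objP m nn f x + y \<bullet> Gs m nn p q A b g x)"
proof -
  have yc: "y \<in> carrier_vec (p+q)" using y by (rule Kpolar_carrier)
  have "Lagr m nn p q f A b g \<Omega> x (kron_vec (ones_vec m) y) = (\<Sum>i<m. ereal (f i (blk nn x i) + y \<bullet> Gfun A b g i (blk nn x i)))"
    unfolding Lagr_kron[OF yc] using x y lagr_fin unfolding Om_def by (intro sum.cong) auto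
  also have "\<dots> = ereal (objP m nn f x + y \<bullet> Gs m nn p q A b g x)"
    unfolding objGs_sum[OF A_dim b_dim g_dim yc] by simp
  finally show ?thesis .
qed

lemma offs_Suc: "offs nn (Suc i) = offs nn i + nn i"
  unfolding offs_def by simp

lemma offs_mono: "i \<le> j \<Longrightarrow> offs nn i \<le> offs nn j"
  unfolding offs_def by (intro sum_mono2) auto

lemma blk_replace:
  assumes x: "x \<in> carrier_vec (\<Sum>i<m. nn i)" and i: "i < m" and xi: "xi \<in> carrier_vec (nn i)"
  shows "\<exists>z\<in>carrier_vec (\<Sum>i<m. nn i). blk nn z i = xi \<and> (\<forall>j<m. j \<noteq> i \<longrightarrow> blk nn z j = blk nn x j)"
proof -
  define N where "N = (\<Sum>i<m. nn i)"
  define z where "z = vec N (\<lambda>k. if offs nn i \<le> k \<and> k < offs nn i + nn i then xi $ (k - offs nn i) else x $ k)"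
  have zc: "z \<in> carrier_vec N" unfolding z_def by simp
  have oi: "offs nn i + nn i \<le> N" unfolding N_def using offs_le[OF i] .
  have "blk nn z i = xi"
  proof (rule eq_vecI)
    fix l assume "l < dim_vec xi"
    hence l: "l < nn i" using xi by simp
    thus "blk nn z i $ l = xi $ l" unfolding z_def using oi by simp
  qed (use xi in simp)
  moreover have "blk nn z j = blk nn x j" if j: "j < m" "j \<noteq> i" for j
  proof (rule eq_vecI)
    fix l assume "l < dim_vec (blk nn x j)"
    hence l: "l < nn j" by simp
    have oj: "offs nn j + nn j \<le> N" unfolding N_def using offs_le[OF j(1)] .
    have out: "\<not> (offs nn i \<le> offs nn j + l \<and> offs nn j + l < offs nn i + nn i)"
    proof (cases "j < i")
      case True
      have "offs nn (Suc j) \<le> offs nn i" using True by (intro offs_mono) simp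
      thus ?thesis using l unfolding offs_Suc by simp
    next
      case False
      hence "Suc i \<le> j" using j(2) by simp
      hence "offs nn (Suc i) \<le> offs nn j" by (rule offs_mono)
      thus ?thesis unfolding offs_Suc by simp
    qed
    have "offs nn j + l < N" using l oj by simp
    thus "blk nn z j $ l = blk nn x j $ l" unfolding z_def using l out by auto
  qed simp
  ultimately show ?thesis using zc unfolding N_def by blast
qed

lemma Lmin:
  assumes A_dim: "\<forall>i<m. A i \<in> carrier_mat p (nn i)" and b_dim: "\<forall>i<m. b i \<in> carrier_vec p"
    and g_dim: "\<forall>i<m. \<forall>xi\<in>carrier_vec (nn i). g i xi \<in> carrier_vec q"
    and x: "x \<in> Om m nn \<Omega>" and y: "y \<in> Kpolar p q"
    and hmin: "\<forall>z\<in>Om m nn \<Omega>. objP m nn f x + y \<bullet> Gs m nn p q A b g x \<le> objP m nn f z + y \<bullet> Gs m nn p q A b g z"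
  shows "\<forall>i<m. \<forall>xi\<in>carrier_vec (nn i). lagr_i p q f A b g \<Omega> i (blk nn x i) y \<le> lagr_i p q f A b g \<Omega> i xi y"
    and "dualfun m nn p q f A b g \<Omega> y = ereal (objP m nn f x + y \<bullet> Gs m nn p q A b g x)"
    and "\<forall>z\<in>carrier_vec (\<Sum>i<m. nn i). Lagr m nn p q f A b g \<Omega> x (kron_vec (ones_vec m) y) \<le> Lagr m nn p q f A b g \<Omega> z (kron_vec (ones_vec m) y)"
proof -
  have yc: "y \<in> carrier_vec (p+q)" using y by (rule Kpolar_carrier)
  define h where "h i u = f i u + y \<bullet> Gfun A b g i u" for i u
  have xc: "x \<in> carrier_vec (\<Sum>i<m. nn i)" and xO: "\<forall>i<m. blk nn x i \<in> \<Omega> i" using x unfolding Om_def by auto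
  have hs: "objP m nn f z + y \<bullet> Gs m nn p q A b g z = (\<Sum>i<m. h i (blk nn z i))" for z
    unfolding h_def by (rule objGs_sum[OF A_dim b_dim g_dim yc])
  show P1: "\<forall>i<m. \<forall>xi\<in>carrier_vec (nn i). lagr_i p q f A b g \<Omega> i (blk nn x i) y \<le> lagr_i p q f A b g \<Omega> i xi y"
  proof (intro allI impI ballI)
    fix i and xi :: "real vec" assume i: "i < m" and xi: "xi \<in> carrier_vec (nn i)"
    show "lagr_i p q f A b g \<Omega> i (blk nn x i) y \<le> lagr_i p q f A b g \<Omega> i xi y"
    proof (cases "xi \<in> \<Omega> i")
      case False thus ?thesis by (simp add: lagr_notO)
    next
      case True
      obtain z where zc: "z \<in> carrier_vec (\<Sum>i<m. nn i)" and zi: "blk nn z i = xi"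
        and zj: "\<forall>j<m. j \<noteq> i \<longrightarrow> blk nn z j = blk nn x j"
        using blk_replace[OF xc i xi] by blast
      have zO: "z \<in> Om m nn \<Omega>" unfolding Om_def using zc zi zj xO True by auto
      have fin: "finite {..<m}" "i \<in> {..<m}" using i by auto
      have "(\<Sum>j<m. h j (blk nn x j)) \<le> (\<Sum>j<m. h j (blk nn z j))" using hmin zO unfolding hs by auto
      moreover have "(\<Sum>j<m. h j (blk nn x j)) = h i (blk nn x i) + (\<Sum>j\<in>{..<m} - {i}. h j (blk nn x j))"
        using sum.remove[OF fin] by blast
      moreover have "(\<Sum>j<m. h j (blk nn z j)) = h i (blk nn z i) + (\<Sum>j\<in>{..<m} - {i}. h j (blk nn z j))"
        using sum.remove[OF fin] by blast
      moreover have "(\<Sum>j\<in>{..<m} - {i}. h j (blk nn z j)) = (\<Sum>j\<in>{..<m} - {i}. h j (blk nn x j))"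
        using zj by (intro sum.cong) auto
      ultimately have "h i (blk nn x i) \<le> h i xi" using zi by simp
      thus ?thesis using lagr_fin[where \<Omega>=\<Omega> and i=i, OF xO[rule_format, OF i] y, of f A b g]
          lagr_fin[where \<Omega>=\<Omega> and i=i, OF True y, of f A b g] unfolding h_def by simp
    qed
  qed
  have inf: "(INF xi\<in>carrier_vec (nn i). lagr_i p q f A b g \<Omega> i xi y) = lagr_i p q f A b g \<Omega> i (blk nn x i) y" if i: "i < m" for i
  proof (rule antisym)
    show "(INF xi\<in>carrier_vec (nn i). lagr_i p q f A b g \<Omega> i xi y) \<le> lagr_i p q f A b g \<Omega> i (blk nn x i) y"
      by (rule INF_lower) simp
    show "lagr_i p q f A b g \<Omega> i (blk nn x i) y \<le> (INF xi\<in>carrier_vec (nn i). lagr_i p q f A b g \<Omega> i xi y)"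
      using P1 i by (intro INF_greatest) auto
  qed
  have "dualfun m nn p q f A b g \<Omega> y = (\<Sum>i<m. lagr_i p q f A b g \<Omega> i (blk nn x i) y)"
    unfolding dualfun_def using inf by simp
  also have "\<dots> = Lagr m nn p q f A b g \<Omega> x (kron_vec (ones_vec m) y)" using Lagr_kron[OF yc] by simp
  also have "\<dots> = ereal (objP m nn f x + y \<bullet> Gs m nn p q A b g x)" by (rule Lagr_Om[OF A_dim b_dim g_dim x y])
  finally show "dualfun m nn p q f A b g \<Omega> y = ereal (objP m nn f x + y \<bullet> Gs m nn p q A b g x)" .
  show "\<forall>z\<in>carrier_vec (\<Sum>i<m. nn i). Lagr m nn p q f A b g \<Omega> x (kron_vec (ones_vec m) y) \<le> Lagr m nn p q f A b g \<Omega> z (kron_vec (ones_vec m) y)"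
  proof
    fix z :: "real vec" assume zc: "z \<in> carrier_vec (\<Sum>i<m. nn i)"
    show "Lagr m nn p q f A b g \<Omega> x (kron_vec (ones_vec m) y) \<le> Lagr m nn p q f A b g \<Omega> z (kron_vec (ones_vec m) y)"
    proof (cases "z \<in> Om m nn \<Omega>")
      case True
      thus ?thesis unfolding Lagr_Om[OF A_dim b_dim g_dim x y] Lagr_Om[OF A_dim b_dim g_dim True y] using hmin by simp
    next
      case False
      then obtain i where i: "i < m" "blk nn z i \<notin> \<Omega> i" using zc unfolding Om_def by auto
      have "Lagr m nn p q f A b g \<Omega> z (kron_vec (ones_vec m) y) = \<infinity>"
        unfolding Lagr_kron[OF yc] sum_Pinfty using i lagr_notO[where \<Omega>=\<Omega> and i=i, OF i(2)] by blast
      thus ?thesis by simp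
    qed
  qed
qed

lemma sum_split_mult:
  fixes F :: "nat \<Rightarrow> 'a::comm_monoid_add"
  shows "(\<Sum>J<m*d. F J) = (\<Sum>i<m. \<Sum>k<d. F (i*d + k))"
proof -
  have "(\<Sum>J<m*d. F J) = (\<Sum>i<m. sum F {i*d..<i*d+d})" by (rule sum.nat_group[symmetric])
  also have "\<dots> = (\<Sum>i<m. \<Sum>k<d. F (i*d + k))"
  proof (rule sum.cong[OF refl])
    fix i
    have "sum F {i*d..<i*d+d} = sum F {0+i*d..<d+i*d}" by (simp add: add.commute)
    also have "\<dots> = (\<Sum>k=0..<d. F (k + i*d))" by (rule sum.shift_bounds_nat_ivl)
    finally show "sum F {i*d..<i*d+d} = (\<Sum>k<d. F (i*d + k))" by (simp add: atLeast0LessThan add.commute)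
  qed
  finally show ?thesis .
qed

lemma divmod_lt:
  assumes "i < m" "k < (d::nat)"
  shows "i * d + k < m * d" "(i * d + k) div d = i" "(i * d + k) mod d = k"
proof -
  have "i * d + k < (i + 1) * d" using assms by simp
  also have "\<dots> \<le> m * d" using assms by (intro mult_right_mono) auto
  finally show "i * d + k < m * d" .
  show "(i * d + k) div d = i" "(i * d + k) mod d = k"
    using assms(2) by (metis add.commute add_cancel_right_right div_less div_mult_self2 mult.commute not_less0, simp)
qed

lemma UU_entry:
  assumes U: "U \<in> carrier_mat r m" and I: "I < r * d" and J: "J < m * d"
  shows "kron_mat U (1\<^sub>m d) $$ (I, J) = U $$ (I div d, J div d) * (if I mod d = J mod d then 1 else 0)"
proof -
  have d: "0 < d" using I by (cases d) auto
  have "I mod d < d" "J mod d < d" using d by auto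
  thus ?thesis unfolding kron_mat_def using U I J by simp
qed

lemma UU_dims:
  assumes U: "U \<in> carrier_mat r m"
  shows "kron_mat U (1\<^sub>m d) \<in> carrier_mat (r * d) (m * d)"
  unfolding kron_mat_def using U by simp

lemma kron_dims[simp]: "dim_row (kron_mat A B) = dim_row A * dim_row B" "dim_col (kron_mat A B) = dim_col A * dim_col B"
  unfolding kron_mat_def by simp_all

lemma UU_kron_zero:
  assumes U: "U \<in> carrier_mat r m" and U1: "U *\<^sub>v ones_vec m = 0\<^sub>v r" and w: "w \<in> carrier_vec d"
  shows "kron_mat U (1\<^sub>m d) *\<^sub>v kron_vec (ones_vec m) w = 0\<^sub>v (r * d)"
proof (rule eq_vecI)
  show "dim_vec (kron_mat U (1\<^sub>m d) *\<^sub>v kron_vec (ones_vec m) w) = dim_vec (0\<^sub>v (r * d))"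
    using U by simp
  fix I assume "I < dim_vec (0\<^sub>v (r * d))"
  hence I: "I < r * d" by simp
  have d: "0 < d" using I by (cases d) auto
  have a: "I div d < r" using I by (simp add: less_mult_imp_div_less)
  have dw: "dim_vec w = d" using w by simp
  have "(kron_mat U (1\<^sub>m d) *\<^sub>v kron_vec (ones_vec m) w) $ I
      = (\<Sum>J<m*d. kron_mat U (1\<^sub>m d) $$ (I, J) * kron_vec (ones_vec m) w $ J)"
    using U I by (simp add: scalar_prod_def row_def atLeast0LessThan dw)
  also have "\<dots> = (\<Sum>i<m. \<Sum>k<d. kron_mat U (1\<^sub>m d) $$ (I, i*d+k) * kron_vec (ones_vec m) w $ (i*d+k))"
    by (rule sum_split_mult)
  also have "\<dots> = (\<Sum>i<m. \<Sum>k<d. U $$ (I div d, i) * (if I mod d = k then w $ k else 0))"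
    using UU_entry[OF U I] divmod_lt kron_ones_index[of _ m _ w] dw by (intro sum.cong refl) auto
  also have "\<dots> = (\<Sum>i<m. U $$ (I div d, i) * w $ (I mod d))"
    using d by (simp add: if_distrib[of "\<lambda>x. _ * x"] sum.delta cong: if_cong)
  also have "\<dots> = (U *\<^sub>v ones_vec m) $ (I div d) * w $ (I mod d)"
    using U a by (simp add: scalar_prod_def row_def ones_vec_def atLeast0LessThan sum_distrib_right)
  also have "\<dots> = 0" using U1 a by simp
  finally show "(kron_mat U (1\<^sub>m d) *\<^sub>v kron_vec (ones_vec m) w) $ I = 0\<^sub>v (r * d) $ I" using I by simp
qed

lemma UUT_index:
  assumes U: "U \<in> carrier_mat r m" and Z: "Z \<in> carrier_vec (r * d)" and J: "J < m * d"
  shows "(transpose_mat (kron_mat U (1\<^sub>m d)) *\<^sub>v Z) $ J = (\<Sum>a<r. U $$ (a, J div d) * Z $ (a * d + J mod d))"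
proof -
  have d: "0 < d" using J by (cases d) auto
  have jd: "J div d < m" "J mod d < d" using J d by (auto simp: less_mult_imp_div_less)
  have "(transpose_mat (kron_mat U (1\<^sub>m d)) *\<^sub>v Z) $ J = (\<Sum>I<r*d. kron_mat U (1\<^sub>m d) $$ (I, J) * Z $ I)"
    using U J Z by (simp add: scalar_prod_def row_def atLeast0LessThan)
  also have "\<dots> = (\<Sum>a<r. \<Sum>k<d. kron_mat U (1\<^sub>m d) $$ (a*d+k, J) * Z $ (a*d+k))"
    by (rule sum_split_mult)
  also have "\<dots> = (\<Sum>a<r. \<Sum>k<d. U $$ (a, J div d) * (if k = J mod d then Z $ (a*d+k) else 0))"
    using UU_entry[OF U _ J] divmod_lt by (intro sum.cong refl) auto
  also have "\<dots> = (\<Sum>a<r. U $$ (a, J div d) * Z $ (a * d + J mod d))"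
    using jd by (simp add: if_distrib[of "\<lambda>x. _ * x"] sum.delta' cong: if_cong)
  finally show ?thesis .
qed

lemma smult_one_mat_vec:
  fixes w :: "'a::comm_ring_1 vec"
  assumes "w \<in> carrier_vec n" shows "(c \<cdot>\<^sub>m 1\<^sub>m n) *\<^sub>v w = c \<cdot>\<^sub>v w"
proof (rule eq_vecI)
  fix i assume "i < dim_vec (c \<cdot>\<^sub>v w)"
  hence i: "i < n" using assms by simp
  have e: "\<And>ia. c * (if i = ia then 1 else 0) * w $ ia = (if i = ia then c * w $ ia else 0)" by simp
  show "((c \<cdot>\<^sub>m 1\<^sub>m n) *\<^sub>v w) $ i = (c \<cdot>\<^sub>v w) $ i" using assms i
    by (simp add: scalar_prod_def row_def e)
qed (use assms in simp)

lemma range_UT: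
  fixes L U :: "real mat"
  assumes m: "0 < m" and L_dim: "L \<in> carrier_mat m m" and L_sym: "transpose_mat L = L"
    and L_null: "{v \<in> carrier_vec m. L *\<^sub>v v = 0\<^sub>v m} = {c \<cdot>\<^sub>v ones_vec m | c. True}"
    and U_dim: "U \<in> carrier_mat r m" and L_U: "L = transpose_mat U * U"
    and w: "w \<in> carrier_vec m" and w0: "(\<Sum>i<m. w $ i) = 0"
  shows "\<exists>z\<in>carrier_vec r. transpose_mat U *\<^sub>v z = w"
proof -
  define one where "one = ones_vec m"
  have onec: "one \<in> carrier_vec m" unfolding one_def ones_vec_def by simp
  have L1: "L *\<^sub>v one = 0\<^sub>v m"
  proof -
    have "one \<in> {c \<cdot>\<^sub>v ones_vec m | c. True}" unfolding one_def by (auto intro!: exI[of _ 1])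
    thus ?thesis using L_null by blast
  qed
  have oneL: "one \<bullet> (L *\<^sub>v v) = 0" if v: "v \<in> carrier_vec m" for v
  proof -
    have "one \<bullet> (L *\<^sub>v v) = (transpose_mat L *\<^sub>v one) \<bullet> v"
      using transpose_vec_mult_scalar[OF L_dim v onec] by simp
    also have "\<dots> = 0" using L_sym L1 v by simp
    finally show ?thesis .
  qed
  have onedot: "one \<bullet> v = (\<Sum>i<m. v $ i)" if "v \<in> carrier_vec m" for v
    using that unfolding one_def ones_vec_def scalar_prod_def by (simp add: atLeast0LessThan)
  define Jm where "Jm = mat m m (\<lambda>_. 1::real)"
  have Jmc: "Jm \<in> carrier_mat m m" unfolding Jm_def by simp
  have Jv: "Jm *\<^sub>v v = (one \<bullet> v) \<cdot>\<^sub>v one" if v: "v \<in> carrier_vec m" for v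
    using v unfolding Jm_def one_def ones_vec_def
    by (intro eq_vecI) (auto simp: scalar_prod_def row_def)
  define M where "M = L + Jm"
  have Mc: "M \<in> carrier_mat m m" unfolding M_def using L_dim Jmc by simp
  have Mv: "M *\<^sub>v v = L *\<^sub>v v + (one \<bullet> v) \<cdot>\<^sub>v one" if v: "v \<in> carrier_vec m" for v
    unfolding M_def using add_mult_distrib_mat_vec[OF L_dim Jmc v] Jv[OF v] by simp
  have zplus: "u + 0 \<cdot>\<^sub>v one = u" if "u \<in> carrier_vec m" for u
    using that onec by (intro eq_vecI) auto
  have oneone: "one \<bullet> one = real m" unfolding one_def ones_vec_def scalar_prod_def by simp
  have oneM: "one \<bullet> (M *\<^sub>v v) = real m * (one \<bullet> v)" if v: "v \<in> carrier_vec m" for v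
  proof -
    have "one \<bullet> (M *\<^sub>v v) = one \<bullet> (L *\<^sub>v v) + one \<bullet> ((one \<bullet> v) \<cdot>\<^sub>v one)"
      unfolding Mv[OF v] using L_dim v onec by (intro scalar_prod_add_distrib[of _ m]) auto
    also have "\<dots> = (one \<bullet> v) * (one \<bullet> one)" using oneL[OF v] onec by simp
    finally show ?thesis using oneone by simp
  qed
  have "det M \<noteq> 0"
  proof
    assume "det M = 0"
    then obtain v where v: "v \<in> carrier_vec m" "v \<noteq> 0\<^sub>v m" "M *\<^sub>v v = 0\<^sub>v m"
      using det_0_iff_vec_prod_zero_field[OF Mc] by blast
    have "real m * (one \<bullet> v) = 0" using oneM[OF v(1)] v(3) onec by simp
    hence ov: "one \<bullet> v = 0" using m by simp
    moreover have "L *\<^sub>v v \<in> carrier_vec m" using L_dim v(1) by simp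
    ultimately have "L *\<^sub>v v = 0\<^sub>v m" using Mv[OF v(1)] v(3) zplus[of "L *\<^sub>v v"] by simp
    hence "v \<in> {c \<cdot>\<^sub>v ones_vec m | c. True}" using L_null v(1) by blast
    then obtain c where c: "v = c \<cdot>\<^sub>v one" unfolding one_def by blast
    have "one \<bullet> v = c * real m" using c onec oneone by simp
    hence "c = 0" using ov m by simp
    hence "v = 0\<^sub>v m" using c onec by auto
    thus False using v(2) by simp
  qed
  define eta where "eta = (1 / det M) \<cdot>\<^sub>v (adj_mat M *\<^sub>v w)"
  have adjc: "adj_mat M \<in> carrier_mat m m" using adj_mat(1)[OF Mc] .
  have etac: "eta \<in> carrier_vec m" unfolding eta_def using adjc w by simp
  have Meta: "M *\<^sub>v eta = w"
  proof -
    have "M *\<^sub>v eta = (1 / det M) \<cdot>\<^sub>v (M *\<^sub>v (adj_mat M *\<^sub>v w))"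
      unfolding eta_def using Mc adjc w by (simp add: mult_mat_vec)
    also have "M *\<^sub>v (adj_mat M *\<^sub>v w) = (M * adj_mat M) *\<^sub>v w"
      using Mc adjc w by (simp add: assoc_mult_mat_vec)
    also have "\<dots> = det M \<cdot>\<^sub>v w" using adj_mat(2)[OF Mc] smult_one_mat_vec[OF w] by simp
    finally show ?thesis using \<open>det M \<noteq> 0\<close> by (simp add: smult_smult_assoc)
  qed
  have "real m * (one \<bullet> eta) = one \<bullet> w" using oneM[OF etac] Meta by simp
  also have "\<dots> = 0" using onedot[OF w] w0 by simp
  finally have "one \<bullet> eta = 0" using m by simp
  moreover have "L *\<^sub>v eta \<in> carrier_vec m" using L_dim etac by simp
  ultimately have Leta: "L *\<^sub>v eta = w" using Mv[OF etac] Meta zplus[of "L *\<^sub>v eta"] by simp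
  define z where "z = U *\<^sub>v eta"
  have "z \<in> carrier_vec r" unfolding z_def using U_dim by (simp add: carrier_vecI)
  moreover have "transpose_mat U *\<^sub>v z = w"
    unfolding z_def using U_dim etac Leta L_U by (simp add: assoc_mult_mat_vec)
  ultimately show ?thesis by blast
qed

lemma Z_exists:
  fixes L U :: "real mat"
  assumes m: "0 < m" and L_dim: "L \<in> carrier_mat m m" and L_sym: "transpose_mat L = L"
    and L_null: "{v \<in> carrier_vec m. L *\<^sub>v v = 0\<^sub>v m} = {c \<cdot>\<^sub>v ones_vec m | c. True}"
    and U_dim: "U \<in> carrier_mat r m" and L_U: "L = transpose_mat U * U"
    and W: "W \<in> carrier_vec (m * d)" and W0: "\<forall>k<d. (\<Sum>i<m. W $ (i * d + k)) = 0"
  shows "\<exists>Z\<in>carrier_vec (r * d). transpose_mat (kron_mat U (1\<^sub>m d)) *\<^sub>v Z = W"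
proof -
  define om where "om k = vec m (\<lambda>i. W $ (i * d + k))" for k
  have "\<forall>k. \<exists>z. k < d \<longrightarrow> z \<in> carrier_vec r \<and> transpose_mat U *\<^sub>v z = om k"
  proof
    fix k
    show "\<exists>z. k < d \<longrightarrow> z \<in> carrier_vec r \<and> transpose_mat U *\<^sub>v z = om k"
    proof (cases "k < d")
      case True
      have "om k \<in> carrier_vec m" unfolding om_def by simp
      moreover have "(\<Sum>i<m. om k $ i) = 0" unfolding om_def using W0 True by simp
      ultimately show ?thesis using range_UT[OF m L_dim L_sym L_null U_dim L_U] by blast
    qed simp
  qed
  then obtain ze where ze: "\<And>k. k < d \<Longrightarrow> ze k \<in> carrier_vec r \<and> transpose_mat U *\<^sub>v ze k = om k"
    by metis
  define Z where "Z = vec (r * d) (\<lambda>I. ze (I mod d) $ (I div d))"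
  have Zc: "Z \<in> carrier_vec (r * d)" unfolding Z_def by simp
  have "transpose_mat (kron_mat U (1\<^sub>m d)) *\<^sub>v Z = W"
  proof (rule eq_vecI)
    show "dim_vec (transpose_mat (kron_mat U (1\<^sub>m d)) *\<^sub>v Z) = dim_vec W" using U_dim W by simp
    fix J assume "J < dim_vec W"
    hence J: "J < m * d" using W by simp
    have d: "0 < d" using J by (cases d) auto
    define i k where "i = J div d" and "k = J mod d"
    have ik: "i < m" "k < d" "J = i * d + k" using J d unfolding i_def k_def by (auto simp: less_mult_imp_div_less)
    have "(transpose_mat (kron_mat U (1\<^sub>m d)) *\<^sub>v Z) $ J = (\<Sum>a<r. U $$ (a, i) * Z $ (a * d + k))"
      unfolding UUT_index[OF U_dim Zc J] i_def k_def ..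
    also have "\<dots> = (\<Sum>a<r. U $$ (a, i) * ze k $ a)"
      unfolding Z_def using divmod_lt[OF _ ik(2)] by (intro sum.cong refl) auto
    also have "\<dots> = (transpose_mat U *\<^sub>v ze k) $ i"
      using U_dim conjunct1[OF ze[OF ik(2)]] ik(1) by (simp add: scalar_prod_def row_def atLeast0LessThan)
    also have "\<dots> = W $ J" using ze[OF ik(2)] ik unfolding om_def by simp
    finally show "(transpose_mat (kron_mat U (1\<^sub>m d)) *\<^sub>v Z) $ J = W $ J" .
  qed
  thus ?thesis using Zc by blast
qed

lemma Kcone_Kpolar_le:
  assumes u: "u \<in> Kcone p q" and y: "y \<in> Kpolar p q"
  shows "y \<bullet> u \<le> 0"
proof -
  have uc: "u \<in> carrier_vec (p+q)" using u unfolding Kcone_def by auto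
  have "y \<bullet> u = (\<Sum>k\<in>{0..<p+q}. y $ k * u $ k)" unfolding scalar_prod_def using uc by simp
  also have "\<dots> \<le> 0"
  proof (rule sum_nonpos)
    fix k assume k: "k \<in> {0..<p+q}"
    show "y $ k * u $ k \<le> 0"
    proof (cases "k < p")
      case True thus ?thesis using u unfolding Kcone_def by auto
    next
      case False
      hence "0 \<le> y $ k" "u $ k \<le> 0" using u y k unfolding Kcone_def Kpolar_def by auto
      thus ?thesis by (simp add: mult_nonneg_nonpos)
    qed
  qed
  finally show ?thesis .
qed

lemma Kcone_of:
  assumes uc: "u \<in> carrier_vec (p+q)" and h: "\<forall>y\<in>Kpolar p q. y \<bullet> u \<le> 0"
  shows "u \<in> Kcone p q"
proof -
  have e: "unit_vec (p+q) j \<in> Kpolar p q" if "j < p+q" for j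
    unfolding Kpolar_def using that by (auto simp: unit_vec_def)
  have e': "(-1) \<cdot>\<^sub>v unit_vec (p+q) j \<in> Kpolar p q" if "j < p" for j
    unfolding Kpolar_def using that by (auto simp: unit_vec_def)
  have d1: "unit_vec (p+q) j \<bullet> u = u $ j" if "j < p+q" for j
    using uc that by (simp add: scalar_prod_left_unit)
  have "\<forall>j<p. u $ j = 0"
  proof (intro allI impI)
    fix j assume j: "j < p"
    have "unit_vec (p+q) j \<bullet> u \<le> 0" using h e[of j] j by auto
    moreover have "((-1) \<cdot>\<^sub>v unit_vec (p+q) j) \<bullet> u \<le> 0" using h e'[OF j] by auto
    moreover have "((-1) \<cdot>\<^sub>v unit_vec (p+q) j) \<bullet> u = - (unit_vec (p+q) j \<bullet> u)"
      using uc by (simp add: smult_scalar_prod_distrib[of _ "p+q"])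
    ultimately show "u $ j = 0" using d1[of j] j by simp
  qed
  moreover have "\<forall>j. p \<le> j \<and> j < p + q \<longrightarrow> u $ j \<le> 0"
    using h e d1 by (metis)
  ultimately show ?thesis unfolding Kcone_def using uc by auto
qed

lemma Lagr_notK_sum:
  assumes m: "0 < m" and x: "x \<in> Om m nn \<Omega>" and yc: "y \<in> carrier_vec (p+q)" and y: "y \<notin> Kpolar p q"
  shows "Lagr m nn p q f A b g \<Omega> x (kron_vec (ones_vec m) y) = -\<infinity>"
proof -
  have xO: "\<forall>i<m. blk nn x i \<in> \<Omega> i" using x unfolding Om_def by auto
  have t: "lagr_i p q f A b g \<Omega> i (blk nn x i) y = -\<infinity>" if "i < m" for i
    using lagr_notK[where \<Omega>=\<Omega> and i=i, OF xO[rule_format, OF that] y] by blast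
  show ?thesis unfolding Lagr_kron[OF yc] using t m by (subst ereal_sum_Minf) auto
qed

lemma weak_dual:
  assumes yc: "y \<in> carrier_vec (p+q)"
  shows "dualfun m nn p q f A b g \<Omega> y \<le> Lagr m nn p q f A b g \<Omega> x (kron_vec (ones_vec m) y)"
  unfolding dualfun_def Lagr_kron[OF yc] by (intro sum_mono INF_lower) simp

lemma real_alg:
  fixes a yy :: "nat \<Rightarrow> nat \<Rightarrow> real" and y g :: "nat \<Rightarrow> real"
  assumes m: "0 < m" and g: "\<forall>k. g k = (\<Sum>i<m. a i k)" and yg: "(\<Sum>k<d. y k * g k) = 0"
    and yyg: "\<forall>i<m. (\<Sum>k<d. yy i k * g k) \<le> 0"
  shows "(\<Sum>i<m. \<Sum>k<d. yy i k * a i k) \<le> (\<Sum>i<m. \<Sum>k<d. (a i k - g k / m) * (yy i k - y k))"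
proof -
  have t: "(a i k - g k / m) * (yy i k - y k) = yy i k * a i k - a i k * y k - (1 / m) * (yy i k * g k) + (1 / m) * (y k * g k)" for i k
    by (simp add: algebra_simps)
  have e1: "(\<Sum>i<m. \<Sum>k<d. (a i k - g k / m) * (yy i k - y k)) =
      (\<Sum>i<m. \<Sum>k<d. yy i k * a i k) - (\<Sum>i<m. \<Sum>k<d. a i k * y k)
      - (1 / m) * (\<Sum>i<m. \<Sum>k<d. yy i k * g k) + (\<Sum>i<m. (1 / m) * (\<Sum>k<d. y k * g k))"
    unfolding t by (simp add: sum.distrib sum_subtractf sum_distrib_left)
  have e2: "(\<Sum>i<m. \<Sum>k<d. a i k * y k) = 0"
  proof -
    have "(\<Sum>i<m. \<Sum>k<d. a i k * y k) = (\<Sum>k<d. \<Sum>i<m. a i k * y k)" by (rule sum.swap)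
    also have "\<dots> = (\<Sum>k<d. y k * (\<Sum>i<m. a i k))" by (simp add: sum_distrib_left mult.commute)
    also have "\<dots> = (\<Sum>k<d. y k * g k)" using g by simp
    finally show ?thesis using yg by simp
  qed
  have e4: "(\<Sum>i<m. \<Sum>k<d. yy i k * g k) \<le> 0"
  proof (rule sum_nonpos)
    fix i assume "i \<in> {..<m}"
    thus "(\<Sum>k<d. yy i k * g k) \<le> 0" using yyg by simp
  qed
  have "0 \<le> - (1 / real m) * (\<Sum>i<m. \<Sum>k<d. yy i k * g k)"
    using e4 m by (intro mult_nonpos_nonpos) auto
  thus ?thesis unfolding e1 e2 yg by simp
qed

lemma neg_scalar: "dim_vec W = dim_vec V \<Longrightarrow> (- W) \<bullet> V = - (W \<bullet> V)" for W V :: "real vec"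
  unfolding scalar_prod_def by (simp add: sum_negf)

lemma dY_sub:
  assumes m: "0 < m"
    and A_dim: "\<forall>i<m. A i \<in> carrier_mat p (nn i)" and b_dim: "\<forall>i<m. b i \<in> carrier_vec p"
    and g_dim: "\<forall>i<m. \<forall>xi\<in>carrier_vec (nn i). g i xi \<in> carrier_vec q"
    and x: "x \<in> Om m nn \<Omega>" and y: "y \<in> Kpolar p q"
    and gK: "Gs m nn p q A b g x \<in> Kcone p q" and yg0: "y \<bullet> Gs m nn p q A b g x = 0"
    and W: "W = vec (m * (p+q)) (\<lambda>J. Gfun A b g (J div (p+q)) (blk nn x (J div (p+q))) $ (J mod (p+q))
              - Gs m nn p q A b g x $ (J mod (p+q)) / m)"
  shows "W \<in> carrier_vec (m * (p+q))"
    and "\<forall>k<p+q. (\<Sum>i<m. W $ (i * (p+q) + k)) = 0"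
    and "- W \<in> subdiff (m * (p+q)) (\<lambda>Y'. - Lagr m nn p q f A b g \<Omega> x Y') (kron_vec (ones_vec m) y)"
proof -
  define d where "d = p + q"
  define a where "a i k = Gfun A b g i (blk nn x i) $ k" for i k
  define gs where "gs k = Gs m nn p q A b g x $ k" for k
  have yc: "y \<in> carrier_vec d" using Kpolar_carrier[OF y] unfolding d_def .
  have gsa: "gs k = (\<Sum>i<m. a i k)" if "k < d" for k
    unfolding gs_def a_def using that Gs_index unfolding d_def by blast
  have Wi: "W $ (i * d + k) = a i k - gs k / m" if "i < m" "k < d" for i k
    unfolding W a_def gs_def d_def[symmetric] using divmod_lt[OF that] by simp
  show Wc: "W \<in> carrier_vec (m * (p+q))" unfolding W by simp
  show "\<forall>k<p+q. (\<Sum>i<m. W $ (i * (p+q) + k)) = 0"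
  proof (intro allI impI)
    fix k assume k: "k < p+q"
    have "(\<Sum>i<m. W $ (i * (p+q) + k)) = (\<Sum>i<m. a i k - gs k / m)"
      using Wi k unfolding d_def by simp
    also have "\<dots> = gs k - m * (gs k / m)" using gsa[of k] k unfolding d_def by (simp add: sum_subtractf)
    also have "\<dots> = 0" using m by simp
    finally show "(\<Sum>i<m. W $ (i * (p+q) + k)) = 0" .
  qed
  define Y where "Y = kron_vec (ones_vec m) y"
  have xO: "\<forall>i<m. blk nn x i \<in> \<Omega> i" using x unfolding Om_def by auto
  have LY: "Lagr m nn p q f A b g \<Omega> x Y = ereal (objP m nn f x)"
    unfolding Y_def Lagr_Om[OF A_dim b_dim g_dim x y] yg0 by simp
  have Ydim: "dim_vec Y = m * d" unfolding Y_def using yc by simp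
  have "- Lagr m nn p q f A b g \<Omega> x Y + ereal ((- W) \<bullet> (Y' - Y)) \<le> - Lagr m nn p q f A b g \<Omega> x Y'"
    if Y': "Y' \<in> carrier_vec (m * d)" for Y'
  proof -
    define yb where "yb i = block Y' (i * d) d" for i
    have LY': "Lagr m nn p q f A b g \<Omega> x Y' = (\<Sum>i<m. lagr_i p q f A b g \<Omega> i (blk nn x i) (yb i))"
      unfolding Lagr_def yb_def d_def ..
    show ?thesis
    proof (cases "\<forall>i<m. yb i \<in> Kpolar p q")
      case False
      then obtain i0 where i0: "i0 < m" "yb i0 \<notin> Kpolar p q" by blast
      have "Lagr m nn p q f A b g \<Omega> x Y' = -\<infinity>"
        unfolding LY'
      proof (rule ereal_sum_Minf)
        show "\<forall>i\<in>{..<m}. lagr_i p q f A b g \<Omega> i (blk nn x i) (yb i) \<noteq> \<infinity>"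
        proof
          fix i assume "i \<in> {..<m}"
          hence Oi: "blk nn x i \<in> \<Omega> i" using xO by auto
          show "lagr_i p q f A b g \<Omega> i (blk nn x i) (yb i) \<noteq> \<infinity>"
          proof (cases "yb i \<in> Kpolar p q")
            case True thus ?thesis using lagr_fin[where \<Omega>=\<Omega> and i=i, OF Oi True] by simp
          next
            case False thus ?thesis using lagr_notK[where \<Omega>=\<Omega> and i=i, OF Oi False] by simp
          qed
        qed
        show "\<exists>i\<in>{..<m}. lagr_i p q f A b g \<Omega> i (blk nn x i) (yb i) = -\<infinity>"
          using i0 lagr_notK[where \<Omega>=\<Omega> and i=i0, OF xO[rule_format, OF i0(1)] i0(2)] by blast
      qed simp
      thus ?thesis by simp
    next
      case True
      have LY'': "Lagr m nn p q f A b g \<Omega> x Y' = ereal (\<Sum>i<m. f i (blk nn x i) + yb i \<bullet> Gfun A b g i (blk nn x i))"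
      proof -
        have "Lagr m nn p q f A b g \<Omega> x Y' = (\<Sum>i<m. ereal (f i (blk nn x i) + yb i \<bullet> Gfun A b g i (blk nn x i)))"
          unfolding LY' using lagr_fin[where \<Omega>=\<Omega>] xO True by (intro sum.cong refl) auto
        thus ?thesis by simp
      qed
      define yy where "yy i k = Y' $ (i * d + k)" for i k
      have Gd: "dim_vec (Gfun A b g i (blk nn x i)) = d" if "i < m" for i
        using Gfun_carrier[of A i p "nn i" b g "blk nn x i" q] A_dim b_dim g_dim that unfolding d_def by auto
      have ybG: "yb i \<bullet> Gfun A b g i (blk nn x i) = (\<Sum>k<d. yy i k * a i k)" if "i < m" for i
        unfolding scalar_prod_def yb_def yy_def a_def using Gd[OF that] by (simp add: atLeast0LessThan)
      have WY: "W \<bullet> (Y' - Y) = (\<Sum>i<m. \<Sum>k<d. (a i k - gs k / m) * (yy i k - y $ k))"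
      proof -
        have "W \<bullet> (Y' - Y) = (\<Sum>J<m*d. W $ J * (Y' $ J - Y $ J))"
          unfolding scalar_prod_def using Ydim Y' by (simp add: atLeast0LessThan)
        also have "\<dots> = (\<Sum>i<m. \<Sum>k<d. W $ (i*d+k) * (Y' $ (i*d+k) - Y $ (i*d+k)))" by (rule sum_split_mult)
        also have "\<dots> = (\<Sum>i<m. \<Sum>k<d. (a i k - gs k / m) * (yy i k - y $ k))"
          using Wi kron_ones_index[of _ m _ y] yc unfolding Y_def yy_def by (intro sum.cong refl) auto
        finally show ?thesis .
      qed
      have ygs: "(\<Sum>k<d. y $ k * gs k) = 0"
        using yg0 unfolding scalar_prod_def gs_def d_def by (simp add: atLeast0LessThan)
      have yygs: "\<forall>i<m. (\<Sum>k<d. yy i k * gs k) \<le> 0"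
      proof (intro allI impI)
        fix i assume i: "i < m"
        have "yb i \<bullet> Gs m nn p q A b g x \<le> 0" using Kcone_Kpolar_le[OF gK] True i by auto
        moreover have "yb i \<bullet> Gs m nn p q A b g x = (\<Sum>k<d. yy i k * gs k)"
          unfolding scalar_prod_def yb_def yy_def gs_def d_def by (simp add: atLeast0LessThan)
        ultimately show "(\<Sum>k<d. yy i k * gs k) \<le> 0" by simp
      qed
      have gsa': "\<forall>k. (if k < d then gs k else 0) = (\<Sum>i<m. if k < d then a i k else 0)"
        using gsa by simp
      have ineq: "(\<Sum>i<m. \<Sum>k<d. yy i k * a i k) \<le> (\<Sum>i<m. \<Sum>k<d. (a i k - gs k / m) * (yy i k - y $ k))"
      proof -
        have "(\<Sum>i<m. \<Sum>k<d. yy i k * (if k < d then a i k else 0)) \<le>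
              (\<Sum>i<m. \<Sum>k<d. ((if k < d then a i k else 0) - (if k < d then gs k else 0) / m) * (yy i k - y $ k))"
          by (rule real_alg[OF m gsa']) (use ygs yygs in simp_all)
        thus ?thesis by simp
      qed
      have "objP m nn f x = (\<Sum>i<m. f i (blk nn x i))" unfolding objP_def ..
      hence "- objP m nn f x + (- W) \<bullet> (Y' - Y) \<le> - (\<Sum>i<m. f i (blk nn x i) + yb i \<bullet> Gfun A b g i (blk nn x i))"
        using ineq ybG WY Wc Ydim Y' by (simp add: neg_scalar d_def sum.distrib)
      thus ?thesis unfolding LY LY'' by simp
    qed
  qed
  moreover have "- W \<in> carrier_vec (m * d)" using Wc unfolding d_def by simp
  ultimately show "- W \<in> subdiff (m * (p+q)) (\<lambda>Y'. - Lagr m nn p q f A b g \<Omega> x Y') (kron_vec (ones_vec m) y)"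
    unfolding subdiff_def d_def[symmetric] Y_def[symmetric] using LY by simp
qed

theorem lemma1:
  fixes m p q r :: nat and nn :: "nat \<Rightarrow> nat"
    and f :: "nat \<Rightarrow> real vec \<Rightarrow> real" and A :: "nat \<Rightarrow> real mat" and b :: "nat \<Rightarrow> real vec"
    and g :: "nat \<Rightarrow> real vec \<Rightarrow> real vec" and \<Omega> :: "nat \<Rightarrow> real vec set"
    and E :: "(nat \<times> nat) set" and L U :: "real mat"
    and x y :: "real vec"
  assumes m: "m \<ge> 2" and nn: "\<forall>i<m. nn i \<ge> 1"
    \<comment> \<open>(A1)\<close>
    and E_V: "E \<subseteq> {..<m} \<times> {..<m}" and E_sym: "sym E"
    and E_conn: "\<forall>i<m. \<forall>j<m. (i, j) \<in> E\<^sup>*"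
    and L_dim: "L \<in> carrier_mat m m" and L_sym: "transpose_mat L = L"
    and L_compat: "\<forall>i<m. \<forall>j<m. i \<noteq> j \<and> (i, j) \<notin> E \<longrightarrow> L $$ (i, j) = 0"
    and L_null: "{v \<in> carrier_vec m. L *\<^sub>v v = 0\<^sub>v m} = {c \<cdot>\<^sub>v ones_vec m | c. True}"
    and U_dim: "U \<in> carrier_mat r m" and L_U: "L = transpose_mat U * U"
    and U_rank: "\<forall>c\<in>carrier_vec r. transpose_mat U *\<^sub>v c = 0\<^sub>v m \<longrightarrow> c = 0\<^sub>v r"
    and U_one: "U *\<^sub>v ones_vec m = 0\<^sub>v r"
    \<comment> \<open>(A2)\<close>
    and A_dim: "\<forall>i<m. A i \<in> carrier_mat p (nn i)" and b_dim: "\<forall>i<m. b i \<in> carrier_vec p"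
    and g_dim: "\<forall>i<m. \<forall>xi\<in>carrier_vec (nn i). g i xi \<in> carrier_vec q"
    and f_cvx: "\<forall>i<m. proper_closed_convex_vec (nn i) (f i)"
    and g_cvx: "\<forall>i<m. \<forall>j<q. proper_closed_convex_vec (nn i) (\<lambda>xi. g i xi $ j)"
    and \<Omega>_ne: "\<forall>i<m. \<Omega> i \<noteq> {}" and \<Omega>_closed: "\<forall>i<m. closed_set_vec (nn i) (\<Omega> i)"
    and \<Omega>_cvx: "\<forall>i<m. convex_set_vec (nn i) (\<Omega> i)"
    and P_solv: "\<exists>x0. optimalP m nn p q f A b g \<Omega> x0"
    \<comment> \<open>(A3)\<close>
    and slater: "\<exists>xb\<in>carrier_vec (\<Sum>i<m. nn i).
        (\<forall>i<m. block xb (offs nn i) (nn i) \<in> interior_vec (nn i) (\<Omega> i)) \<and>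
        sumv p (\<lambda>i. A i *\<^sub>v block xb (offs nn i) (nn i) - b i) {..<m} = 0\<^sub>v p \<and>
        (\<forall>j<q. (\<Sum>i<m. g i (block xb (offs nn i) (nn i)) $ j) < 0)"
    and x_dim: "x \<in> carrier_vec (\<Sum>i<m. nn i)" and y_dim: "y \<in> carrier_vec (p+q)"
  shows "(optimalP m nn p q f A b g \<Omega> x \<and> optimalD m nn p q f A b g \<Omega> y) \<longleftrightarrow>
    (\<exists>Z\<in>carrier_vec (r*(p+q)). \<exists>Y. Y = kron_vec (ones_vec m) y \<and>
       (0\<^sub>v (\<Sum>i<m. nn i), 0\<^sub>v (m*(p+q)), 0\<^sub>v (r*(p+q))) \<in> Phi m nn p q f A b g \<Omega> U x Y Z)"
proof -
  have m0: "0 < m" using m by simp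
  define d where "d = p + q"
  define Y where "Y = kron_vec (ones_vec m) y"
  define UU where "UU = kron_mat U (1\<^sub>m (p+q))"
  have UUc: "UU \<in> carrier_mat (r * (p+q)) (m * (p+q))" unfolding UU_def by (rule UU_dims[OF U_dim])
  have "dim_vec Y = m * (p+q)" unfolding Y_def using y_dim by simp
  hence Yc: "Y \<in> carrier_vec (m * (p+q))" by (rule carrier_vecI)
  have UUY: "UU *\<^sub>v Y = 0\<^sub>v (r * (p+q))" unfolding UU_def Y_def by (rule UU_kron_zero[OF U_dim U_one y_dim])
  have PhiE: "(0\<^sub>v (\<Sum>i<m. nn i), 0\<^sub>v (m*(p+q)), 0\<^sub>v (r*(p+q))) \<in> Phi m nn p q f A b g \<Omega> U x Y Z \<longleftrightarrow>
     0\<^sub>v (\<Sum>i<m. nn i) \<in> subdiff (\<Sum>i<m. nn i) (\<lambda>x'. Lagr m nn p q f A b g \<Omega> x' Y) x \<and>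
     (\<exists>w. 0\<^sub>v (m*(p+q)) = - w + transpose_mat UU *\<^sub>v Z \<and>
        w \<in> (\<lambda>v. - v) ` subdiff (m*(p+q)) (\<lambda>Y'. - Lagr m nn p q f A b g \<Omega> x Y') Y) \<and>
     0\<^sub>v (r*(p+q)) = - (UU *\<^sub>v Y)" for Z
    unfolding Phi_def Let_def UU_def by blast
  have weakD: "dualfun m nn p q f A b g \<Omega> y' \<le> ereal (objP m nn f x)"
    if xO: "x \<in> Om m nn \<Omega>" and gK: "Gs m nn p q A b g x \<in> Kcone p q" and y': "y' \<in> carrier_vec (p+q)" for y'
  proof -
    have "dualfun m nn p q f A b g \<Omega> y' \<le> Lagr m nn p q f A b g \<Omega> x (kron_vec (ones_vec m) y')"
      by (rule weak_dual[OF y'])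
    also have "\<dots> \<le> ereal (objP m nn f x)"
    proof (cases "y' \<in> Kpolar p q")
      case True
      have "y' \<bullet> Gs m nn p q A b g x \<le> 0" by (rule Kcone_Kpolar_le[OF gK True])
      thus ?thesis unfolding Lagr_Om[OF A_dim b_dim g_dim xO True] by simp
    next
      case False thus ?thesis using Lagr_notK_sum[OF m0 xO y' False] by simp
    qed
    finally show ?thesis .
  qed
  show ?thesis
  proof
    assume LHS: "optimalP m nn p q f A b g \<Omega> x \<and> optimalD m nn p q f A b g \<Omega> y"
    have xf: "feasibleP m nn p q A b g \<Omega> x" and xopt: "\<forall>x'. feasibleP m nn p q A b g \<Omega> x' \<longrightarrow> objP m nn f x \<le> objP m nn f x'"
      using LHS unfolding optimalP_def by auto
    have yopt: "\<forall>y'\<in>carrier_vec (p+q). dualfun m nn p q f A b g \<Omega> y' \<le> dualfun m nn p q f A b g \<Omega> y"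
      using LHS unfolding optimalD_def by auto
    have xO: "x \<in> Om m nn \<Omega>" using xf unfolding feasibleP_def Om_def by auto
    have gK: "Gs m nn p q A b g x \<in> Kcone p q" using xf unfolding feasibleP_def Gs_def by auto
    obtain ys where ys: "ys \<in> Kpolar p q" and ysm: "\<forall>z\<in>Om m nn \<Omega>. objP m nn f x \<le> objP m nn f z + ys \<bullet> Gs m nn p q A b g z"
      using strong_dual[OF m0 A_dim b_dim g_dim f_cvx g_cvx \<Omega>_cvx slater, of "objP m nn f x"] xopt by blast
    have ys0: "ys \<bullet> Gs m nn p q A b g x = 0"
      using Kcone_Kpolar_le[OF gK ys] ysm xO by force
    have "dualfun m nn p q f A b g \<Omega> ys = ereal (objP m nn f x + ys \<bullet> Gs m nn p q A b g x)"
      using Lmin(2)[OF A_dim b_dim g_dim xO ys] ysm ys0 by simp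
    hence dys: "dualfun m nn p q f A b g \<Omega> ys = ereal (objP m nn f x)" using ys0 by simp
    have dy: "ereal (objP m nn f x) \<le> dualfun m nn p q f A b g \<Omega> y"
      using yopt Kpolar_carrier[OF ys] dys by metis
    have wd: "dualfun m nn p q f A b g \<Omega> y \<le> Lagr m nn p q f A b g \<Omega> z Y" for z
      unfolding Y_def by (rule weak_dual[OF y_dim])
    have yK: "y \<in> Kpolar p q"
    proof (rule ccontr)
      assume "y \<notin> Kpolar p q"
      hence "Lagr m nn p q f A b g \<Omega> x Y = -\<infinity>" unfolding Y_def by (rule Lagr_notK_sum[OF m0 xO y_dim])
      thus False using dy wd[of x] by simp
    qed
    have LxY: "Lagr m nn p q f A b g \<Omega> x Y = ereal (objP m nn f x + y \<bullet> Gs m nn p q A b g x)"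
      unfolding Y_def by (rule Lagr_Om[OF A_dim b_dim g_dim xO yK])
    have "ereal (objP m nn f x) \<le> ereal (objP m nn f x + y \<bullet> Gs m nn p q A b g x)"
      using dy wd[of x] LxY by (metis order_trans)
    hence "0 \<le> y \<bullet> Gs m nn p q A b g x" by simp
    hence yg0: "y \<bullet> Gs m nn p q A b g x = 0"
      using Kcone_Kpolar_le[OF gK yK] by simp
    have hmin: "\<forall>z\<in>Om m nn \<Omega>. objP m nn f x + y \<bullet> Gs m nn p q A b g x \<le> objP m nn f z + y \<bullet> Gs m nn p q A b g z"
    proof
      fix z assume zO: "z \<in> Om m nn \<Omega>"
      have "ereal (objP m nn f x) \<le> Lagr m nn p q f A b g \<Omega> z Y" using dy wd[of z] by simp
      thus "objP m nn f x + y \<bullet> Gs m nn p q A b g x \<le> objP m nn f z + y \<bullet> Gs m nn p q A b g z"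
        unfolding Y_def Lagr_Om[OF A_dim b_dim g_dim zO yK] yg0 by simp
    qed
    have Lm: "\<forall>z\<in>carrier_vec (\<Sum>i<m. nn i). Lagr m nn p q f A b g \<Omega> x Y \<le> Lagr m nn p q f A b g \<Omega> z Y"
      unfolding Y_def by (rule Lmin(3)[OF A_dim b_dim g_dim xO yK hmin])
    have dx: "0\<^sub>v (\<Sum>i<m. nn i) \<in> subdiff (\<Sum>i<m. nn i) (\<lambda>x'. Lagr m nn p q f A b g \<Omega> x' Y) x"
      unfolding subdiff_def using Lm LxY x_dim by (auto simp: scalar_prod_left_zero)
    define W where "W = vec (m * (p+q)) (\<lambda>J. Gfun A b g (J div (p+q)) (blk nn x (J div (p+q))) $ (J mod (p+q))
              - Gs m nn p q A b g x $ (J mod (p+q)) / m)"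
    note DY = dY_sub[OF m0 A_dim b_dim g_dim xO yK gK yg0 W_def]
    obtain Z where Zc: "Z \<in> carrier_vec (r * (p+q))" and ZW: "transpose_mat UU *\<^sub>v Z = W"
      using Z_exists[OF m0 L_dim L_sym L_null U_dim L_U DY(1,2)] unfolding UU_def by blast
    have "W \<in> (\<lambda>v. - v) ` subdiff (m*(p+q)) (\<lambda>Y'. - Lagr m nn p q f A b g \<Omega> x Y') Y"
      using DY(3) unfolding Y_def by (intro image_eqI[of _ _ "- W"]) auto
    moreover have "0\<^sub>v (m*(p+q)) = - W + transpose_mat UU *\<^sub>v Z" unfolding ZW using DY(1) by simp
    ultimately have "(0\<^sub>v (\<Sum>i<m. nn i), 0\<^sub>v (m*(p+q)), 0\<^sub>v (r*(p+q))) \<in> Phi m nn p q f A b g \<Omega> U x Y Z"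
      unfolding PhiE using dx UUY by auto
    thus "\<exists>Z\<in>carrier_vec (r*(p+q)). \<exists>Y. Y = kron_vec (ones_vec m) y \<and>
       (0\<^sub>v (\<Sum>i<m. nn i), 0\<^sub>v (m*(p+q)), 0\<^sub>v (r*(p+q))) \<in> Phi m nn p q f A b g \<Omega> U x Y Z"
      using Zc unfolding Y_def by blast
  next
    assume "\<exists>Z\<in>carrier_vec (r*(p+q)). \<exists>Y. Y = kron_vec (ones_vec m) y \<and>
       (0\<^sub>v (\<Sum>i<m. nn i), 0\<^sub>v (m*(p+q)), 0\<^sub>v (r*(p+q))) \<in> Phi m nn p q f A b g \<Omega> U x Y Z"
    then obtain Z where Zc: "Z \<in> carrier_vec (r*(p+q))"
      and PZ: "(0\<^sub>v (\<Sum>i<m. nn i), 0\<^sub>v (m*(p+q)), 0\<^sub>v (r*(p+q))) \<in> Phi m nn p q f A b g \<Omega> U x Y Z"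
      unfolding Y_def by blast
    note P = PZ[unfolded PhiE]
    have fin: "\<bar>Lagr m nn p q f A b g \<Omega> x Y\<bar> \<noteq> \<infinity>"
      and lm0: "\<forall>z\<in>carrier_vec (\<Sum>i<m. nn i). Lagr m nn p q f A b g \<Omega> x Y + ereal (0\<^sub>v (\<Sum>i<m. nn i) \<bullet> (z - x)) \<le> Lagr m nn p q f A b g \<Omega> z Y"
      using P unfolding subdiff_def by auto
    have lm: "\<forall>z\<in>carrier_vec (\<Sum>i<m. nn i). Lagr m nn p q f A b g \<Omega> x Y \<le> Lagr m nn p q f A b g \<Omega> z Y"
      using lm0 x_dim by (auto simp: scalar_prod_left_zero)
    have fini: "\<bar>lagr_i p q f A b g \<Omega> i (blk nn x i) y\<bar> \<noteq> \<infinity>" if "i < m" for i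
      using ereal_sum_fin[of "{..<m}" "\<lambda>i. lagr_i p q f A b g \<Omega> i (blk nn x i) y" i] fin that
      unfolding Y_def Lagr_kron[OF y_dim] by simp
    have xOi: "blk nn x i \<in> \<Omega> i" if "i < m" for i
    proof (rule ccontr)
      assume "blk nn x i \<notin> \<Omega> i"
      thus False using fini[OF that] lagr_notO[where \<Omega>=\<Omega> and i=i] by force
    qed
    have xO: "x \<in> Om m nn \<Omega>" unfolding Om_def using x_dim xOi by auto
    have yK: "y \<in> Kpolar p q"
    proof (rule ccontr)
      assume "y \<notin> Kpolar p q"
      thus False using fini[OF m0] lagr_notK[where \<Omega>=\<Omega> and i=0, OF xOi[OF m0]] by force
    qed
    have LO: "Lagr m nn p q f A b g \<Omega> z (kron_vec (ones_vec m) y') = ereal (objP m nn f z + y' \<bullet> Gs m nn p q A b g z)"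
      if "z \<in> Om m nn \<Omega>" "y' \<in> Kpolar p q" for z y'
      by (rule Lagr_Om[OF A_dim b_dim g_dim that])
    have hmin: "\<forall>z\<in>Om m nn \<Omega>. objP m nn f x + y \<bullet> Gs m nn p q A b g x \<le> objP m nn f z + y \<bullet> Gs m nn p q A b g z"
    proof
      fix z assume zO: "z \<in> Om m nn \<Omega>"
      have "Lagr m nn p q f A b g \<Omega> x Y \<le> Lagr m nn p q f A b g \<Omega> z Y" using lm zO unfolding Om_def by auto
      thus "objP m nn f x + y \<bullet> Gs m nn p q A b g x \<le> objP m nn f z + y \<bullet> Gs m nn p q A b g z"
        unfolding Y_def LO[OF xO yK] LO[OF zO yK] by simp
    qed
    obtain w where w0: "0\<^sub>v (m*(p+q)) = - w + transpose_mat UU *\<^sub>v Z"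
      and wS: "w \<in> (\<lambda>v. - v) ` subdiff (m*(p+q)) (\<lambda>Y'. - Lagr m nn p q f A b g \<Omega> x Y') Y"
      using P by blast
    obtain v where wv: "w = - v" and vS: "v \<in> subdiff (m*(p+q)) (\<lambda>Y'. - Lagr m nn p q f A b g \<Omega> x Y') Y"
      using wS by blast
    have vc: "v \<in> carrier_vec (m*(p+q))" using vS unfolding subdiff_def by auto
    have vineq: "\<forall>Y'\<in>carrier_vec (m*(p+q)). - Lagr m nn p q f A b g \<Omega> x Y + ereal (v \<bullet> (Y' - Y)) \<le> - Lagr m nn p q f A b g \<Omega> x Y'"
      using vS unfolding subdiff_def by auto
    define T where "T = transpose_mat UU *\<^sub>v Z"
    have Tc: "T \<in> carrier_vec (m*(p+q))" unfolding T_def using UUc Zc by (metis mult_mat_vec_carrier transpose_carrier_mat)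
    have vT: "v = - T"
    proof (rule eq_vecI)
      fix J assume "J < dim_vec (- T)"
      hence J: "J < m*(p+q)" using Tc by simp
      have "0\<^sub>v (m*(p+q)) $ J = (- w + T) $ J" using w0 unfolding T_def by simp
      thus "v $ J = (- T) $ J" using J vc Tc unfolding wv by simp
    qed (use vc Tc in simp)
    have yy: "y' \<bullet> Gs m nn p q A b g x \<le> y \<bullet> Gs m nn p q A b g x" if y': "y' \<in> Kpolar p q" for y'
    proof -
      have y'c: "y' \<in> carrier_vec (p+q)" using Kpolar_carrier[OF y'] .
      define Y' where "Y' = kron_vec (ones_vec m) y'"
      have "dim_vec Y' = m * (p+q)" unfolding Y'_def using y'c by simp
      hence Y'c: "Y' \<in> carrier_vec (m*(p+q))" by (rule carrier_vecI)
      have dif: "Y' - Y = kron_vec (ones_vec m) (y' - y)"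
      proof (rule eq_vecI)
        fix J assume "J < dim_vec (kron_vec (ones_vec m) (y' - y))"
        hence J: "J < m * (p+q)" using y_dim by simp
        hence pq: "0 < p + q" by (cases "p+q") auto
        have "J mod (p+q) < p + q" using pq by simp
        thus "(Y' - Y) $ J = kron_vec (ones_vec m) (y' - y) $ J"
          using J y'c y_dim unfolding Y'_def Y_def kron_vec_def ones_vec_def by (simp add: less_mult_imp_div_less)
      qed (use y'c y_dim in \<open>simp add: Y'_def Y_def\<close>)
      have "T \<bullet> (Y' - Y) = Z \<bullet> (UU *\<^sub>v kron_vec (ones_vec m) (y' - y))"
      proof -
        have "dim_vec (kron_vec (ones_vec m) (y' - y)) = m * (p+q)" using y_dim by simp
        hence "kron_vec (ones_vec m) (y' - y) \<in> carrier_vec (m * (p+q))" by (rule carrier_vecI)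
        thus ?thesis unfolding T_def dif using transpose_vec_mult_scalar[OF UUc _ Zc] by simp
      qed
      also have "\<dots> = 0" unfolding UU_def using UU_kron_zero[OF U_dim U_one, of "y' - y" "p+q"] y_dim y'c Zc
        by (simp add: scalar_prod_right_zero)
      finally have T0: "T \<bullet> (Y' - Y) = 0" .
      have "v \<bullet> (Y' - Y) = 0" unfolding vT using neg_scalar[of T "Y' - Y"] T0 Tc Yc by simp
      hence "- Lagr m nn p q f A b g \<Omega> x Y \<le> - Lagr m nn p q f A b g \<Omega> x Y'" using vineq Y'c by force
      thus ?thesis unfolding Y_def Y'_def LO[OF xO yK] LO[OF xO y'] by simp
    qed
    have z0: "0\<^sub>v (p+q) \<in> Kpolar p q" unfolding Kpolar_def by simp
    have y2: "2 \<cdot>\<^sub>v y \<in> Kpolar p q" using yK unfolding Kpolar_def by auto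
    have Gc: "Gs m nn p q A b g x \<in> carrier_vec (p+q)" by simp
    have yg0: "y \<bullet> Gs m nn p q A b g x = 0"
      using yy[OF z0] yy[OF y2] Gc y_dim by (simp add: scalar_prod_left_zero smult_scalar_prod_distrib[of _ "p+q"])
    have gK: "Gs m nn p q A b g x \<in> Kcone p q"
      using yy yg0 by (intro Kcone_of[OF Gc]) simp
    have xf: "feasibleP m nn p q A b g \<Omega> x" using xO gK unfolding feasibleP_def Om_def Gs_def by auto
    have "optimalP m nn p q f A b g \<Omega> x"
      unfolding optimalP_def
    proof (intro conjI allI impI xf)
      fix z assume zf: "feasibleP m nn p q A b g \<Omega> z"
      have zO: "z \<in> Om m nn \<Omega>" using zf unfolding feasibleP_def Om_def by auto
      have "Gs m nn p q A b g z \<in> Kcone p q" using zf unfolding feasibleP_def Gs_def by auto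
      hence "y \<bullet> Gs m nn p q A b g z \<le> 0" by (rule Kcone_Kpolar_le[OF _ yK])
      thus "objP m nn f x \<le> objP m nn f z" using hmin zO yg0 by force
    qed
    moreover have "optimalD m nn p q f A b g \<Omega> y"
    proof -
      have "dualfun m nn p q f A b g \<Omega> y = ereal (objP m nn f x)"
        using Lmin(2)[OF A_dim b_dim g_dim xO yK hmin] yg0 by simp
      thus ?thesis unfolding optimalD_def using y_dim weakD[OF xO gK] by auto
    qed
    ultimately show "optimalP m nn p q f A b g \<Omega> x \<and> optimalD m nn p q f A b g \<Omega> y" ..
  qed
qed

end
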